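(* Let $\epsilon>0$. For any two quantum states $\rho,\sigma$ on a finite-dimensional Hilbert space $H_A$, \[ n^{\star}_{\mathrm B,\epsilon}(\rho,\sigma,0.5,0.1)\le\left(\frac{e^\epsilon+1}{e^\epsilon-1}\right)^2\frac{2\log 5}{E_1(\rho\|\sigma)^2}. \]
   Context: All Hilbert spaces are finite-dimensional, $\log$ is natural, $a/0=+\infty$ for $a>0$. $E_\gamma(\rho\|\sigma)=\mathrm{Tr}(\rho-\gamma\sigma)_+$ (positive part); in particular $E_1(\rho\|\sigma)=\frac12\|\rho-\sigma\|_1$. For $p\in(0,1)$, $p_e(\rho,\sigma,p):=p-pE_{(1-p)/p}(\rho\|\sigma)$ and $n^{\star}_{\mathrm B}(\rho,\sigma,p,\delta):=\inf\{n\in\mathbb N:p_e(\rho^{\otimes n},\sigma^{\otimes n},p)\le\delta\}$. For $\epsilon\ge0$, a quantum channel (CPTP map) $\mathcal A$ from operators on $H_A$ to operators on some finite-dimensional $H_B$ is $\epsilon$-locally differentially private ($\mathcal A\in\mathrm{LDP}_\epsilon$) if $E_{e^\epsilon}(\mathcal A(\rho)\|\mathcal A(\sigma))=0$ for all states $\rho,\sigma$ on $H_A$. Then $n^{\star}_{\mathrm B,\epsilon}(\rho,\sigma,p,\delta):=\inf_{\mathcal A\in\mathrm{LDP}_\epsilon} n^{\star}_{\mathrm B}(\mathcal A(\rho),\mathcal A(\sigma),p,\delta)$, the infimum over all such channels with arbitrary finite-dimensional output. *)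

theory Defs
  imports "Jordan_Normal_Form.Schur_Decomposition" "HOL-Library.Extended_Real"
begin

text \<open>Operators on a d-dimensional Hilbert space are complex d x d matrices
  (elements of carrier_mat d d).\<close>

definition mtrace :: "complex mat \<Rightarrow> complex" where
  "mtrace A = (\<Sum>i<dim_row A. A $$ (i, i))"

definition hermitian :: "complex mat \<Rightarrow> bool" where
  "hermitian A \<longleftrightarrow> A \<in> carrier_mat (dim_row A) (dim_row A) \<and> mat_adjoint A = A"

definition psd :: "complex mat \<Rightarrow> bool" where
  "psd A \<longleftrightarrow> hermitian A \<and>
     (\<forall>v \<in> carrier_vec (dim_row A). Im (conjugate v \<bullet> (A *\<^sub>v v)) = 0
                                    \<and> Re (conjugate v \<bullet> (A *\<^sub>v v)) \<ge> 0)"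

definition density_op :: "nat \<Rightarrow> complex mat \<Rightarrow> bool" where
  "density_op d \<rho> \<longleftrightarrow> \<rho> \<in> carrier_mat d d \<and> psd \<rho> \<and> mtrace \<rho> = 1"

definition unitary_mat :: "nat \<Rightarrow> complex mat \<Rightarrow> bool" where
  "unitary_mat d U \<longleftrightarrow> U \<in> carrier_mat d d \<and> U * mat_adjoint U = 1\<^sub>m d
                        \<and> mat_adjoint U * U = 1\<^sub>m d"

definition real_diag_mat :: "nat \<Rightarrow> (nat \<Rightarrow> real) \<Rightarrow> complex mat" where
  "real_diag_mat d f = mat d d (\<lambda>(i, j). if i = j then complex_of_real (f i) else 0)"

definition pos_part :: "complex mat \<Rightarrow> complex mat" where
  "pos_part A = (SOME P. \<exists>U lam. unitary_mat (dim_row A) U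
        \<and> A = U * real_diag_mat (dim_row A) lam * mat_adjoint U
        \<and> P = U * real_diag_mat (dim_row A) (\<lambda>i. max (lam i) 0) * mat_adjoint U)"

definition E_div :: "real \<Rightarrow> complex mat \<Rightarrow> complex mat \<Rightarrow> real" where
  "E_div \<gamma> \<rho> \<sigma> = Re (mtrace (pos_part (\<rho> - complex_of_real \<gamma> \<cdot>\<^sub>m \<sigma>)))"

definition kron :: "complex mat \<Rightarrow> complex mat \<Rightarrow> complex mat" where
  "kron A B = mat (dim_row A * dim_row B) (dim_col A * dim_col B)
     (\<lambda>(i, j). A $$ (i div dim_row B, j div dim_col B) * B $$ (i mod dim_row B, j mod dim_col B))"

fun tensor_pow :: "complex mat \<Rightarrow> nat \<Rightarrow> complex mat" where
  "tensor_pow A 0 = 1\<^sub>m 1"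
| "tensor_pow A (Suc n) = kron (tensor_pow A n) A"

definition p_err :: "complex mat \<Rightarrow> complex mat \<Rightarrow> real \<Rightarrow> real" where
  "p_err \<rho> \<sigma> p = p - p * E_div ((1 - p) / p) \<rho> \<sigma>"

text \<open>Bayesian sample complexity (infimum over the naturals; Inf of the empty set is +infinity).\<close>
definition n_B :: "complex mat \<Rightarrow> complex mat \<Rightarrow> real \<Rightarrow> real \<Rightarrow> ereal" where
  "n_B \<rho> \<sigma> p \<delta> = (INF n \<in> {n::nat. p_err (tensor_pow \<rho> n) (tensor_pow \<sigma> n) p \<le> \<delta>}. ereal (real n))"

text \<open>Quantum channels. A map Phi from operators on C^dA to operators on C^dB.
  The (i,j) block (size dA x dA) of a (k*dA) x (k*dA) matrix, and the action
  of id_k (x) Phi on such a matrix.\<close>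
definition block_of :: "nat \<Rightarrow> complex mat \<Rightarrow> nat \<Rightarrow> nat \<Rightarrow> complex mat" where
  "block_of dA X a b = mat dA dA (\<lambda>(r, s). X $$ (a * dA + r, b * dA + s))"

definition ampliate :: "nat \<Rightarrow> nat \<Rightarrow> nat \<Rightarrow> (complex mat \<Rightarrow> complex mat) \<Rightarrow> complex mat \<Rightarrow> complex mat" where
  "ampliate k dA dB \<Phi> X = mat (k * dB) (k * dB)
     (\<lambda>(i, j). \<Phi> (block_of dA X (i div dB) (j div dB)) $$ (i mod dB, j mod dB))"

definition linear_map_on :: "nat \<Rightarrow> nat \<Rightarrow> (complex mat \<Rightarrow> complex mat) \<Rightarrow> bool" where
  "linear_map_on dA dB \<Phi> \<longleftrightarrow>
     (\<forall>X \<in> carrier_mat dA dA. \<Phi> X \<in> carrier_mat dB dB) \<and>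
     (\<forall>X \<in> carrier_mat dA dA. \<forall>Y \<in> carrier_mat dA dA. \<forall>a b :: complex.
        \<Phi> (a \<cdot>\<^sub>m X + b \<cdot>\<^sub>m Y) = a \<cdot>\<^sub>m \<Phi> X + b \<cdot>\<^sub>m \<Phi> Y)"

definition completely_positive :: "nat \<Rightarrow> nat \<Rightarrow> (complex mat \<Rightarrow> complex mat) \<Rightarrow> bool" where
  "completely_positive dA dB \<Phi> \<longleftrightarrow>
     (\<forall>k. \<forall>X \<in> carrier_mat (k * dA) (k * dA). psd X \<longrightarrow> psd (ampliate k dA dB \<Phi> X))"

definition trace_preserving :: "nat \<Rightarrow> (complex mat \<Rightarrow> complex mat) \<Rightarrow> bool" where
  "trace_preserving dA \<Phi> \<longleftrightarrow> (\<forall>X \<in> carrier_mat dA dA. mtrace (\<Phi> X) = mtrace X)"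

definition cptp :: "nat \<Rightarrow> nat \<Rightarrow> (complex mat \<Rightarrow> complex mat) \<Rightarrow> bool" where
  "cptp dA dB \<Phi> \<longleftrightarrow> linear_map_on dA dB \<Phi> \<and> completely_positive dA dB \<Phi> \<and> trace_preserving dA \<Phi>"

definition LDP :: "real \<Rightarrow> nat \<Rightarrow> nat \<Rightarrow> (complex mat \<Rightarrow> complex mat) \<Rightarrow> bool" where
  "LDP \<epsilon> dA dB \<Phi> \<longleftrightarrow> cptp dA dB \<Phi> \<and>
     (\<forall>\<rho> \<sigma>. density_op dA \<rho> \<longrightarrow> density_op dA \<sigma> \<longrightarrow> E_div (exp \<epsilon>) (\<Phi> \<rho>) (\<Phi> \<sigma>) = 0)"

definition n_B_priv :: "real \<Rightarrow> nat \<Rightarrow> complex mat \<Rightarrow> complex mat \<Rightarrow> real \<Rightarrow> real \<Rightarrow> ereal" where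
  "n_B_priv \<epsilon> dA \<rho> \<sigma> p \<delta> =
     (INF (dB, \<Phi>) \<in> {(dB, \<Phi>). LDP \<epsilon> dA dB \<Phi>}. n_B (\<Phi> \<rho>) (\<Phi> \<sigma>) p \<delta>)"

end

theory Submission
  imports Defs "Jordan_Normal_Form.Spectral_Radius"
begin

lemma mult_entry:
  assumes "A \<in> carrier_mat n m" "B \<in> carrier_mat m p" "i < n" "j < p"
  shows "(A * B) $$ (i, j) = (\<Sum>k<m. A $$ (i, k) * B $$ (k, j))"
  using assms by (auto simp: scalar_prod_def atLeast0LessThan intro!: sum.cong)

lemma adj_carrier: "A \<in> carrier_mat n m \<Longrightarrow> mat_adjoint A \<in> carrier_mat m n"
  by (auto simp: mat_adjoint_def)

lemma adj_entry: "A \<in> carrier_mat n m \<Longrightarrow> i < m \<Longrightarrow> j < n \<Longrightarrow>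
   mat_adjoint A $$ (i, j) = cnj (A $$ (j, i))"
  by (auto simp: mat_adjoint_def mat_of_rows_def)

lemma rdm_carrier[simp]: "real_diag_mat n f \<in> carrier_mat n n"
  by (simp add: real_diag_mat_def)

lemma rdm_entry: "i < n \<Longrightarrow> j < n \<Longrightarrow> real_diag_mat n f $$ (i,j) = (if i = j then complex_of_real (f i) else 0)"
  by (simp add: real_diag_mat_def)

lemma triple_entry:
  assumes U: "U \<in> carrier_mat n n" and i: "i < n" and j: "j < n"
  shows "(U * real_diag_mat n f * mat_adjoint U) $$ (i,j) = (\<Sum>k<n. U $$ (i,k) * complex_of_real (f k) * cnj (U $$ (j,k)))"
proof -
  have "(U * real_diag_mat n f * mat_adjoint U) $$ (i,j) = (\<Sum>k<n. (U * real_diag_mat n f) $$ (i,k) * mat_adjoint U $$ (k,j))"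
    by (rule mult_entry[OF _ adj_carrier[OF U] i j], use U in auto)
  also have "\<dots> = (\<Sum>k<n. U $$ (i,k) * complex_of_real (f k) * cnj (U $$ (j,k)))"
  proof (rule sum.cong[OF refl])
    fix k assume k: "k \<in> {..<n}"
    have "(U * real_diag_mat n f) $$ (i,k) = (\<Sum>l<n. U $$ (i,l) * real_diag_mat n f $$ (l,k))"
      by (rule mult_entry[OF U _ i], use k in auto)
    also have "\<dots> = (\<Sum>l<n. if l = k then U $$ (i,k) * complex_of_real (f k) else 0)"
      using k by (intro sum.cong, auto simp: rdm_entry)
    also have "\<dots> = U $$ (i,k) * complex_of_real (f k)" using k by simp
    finally show "(U * real_diag_mat n f) $$ (i,k) * mat_adjoint U $$ (k,j) = U $$ (i,k) * complex_of_real (f k) * cnj (U $$ (j,k))"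
      using adj_entry[OF U] k j by simp
  qed
  finally show ?thesis .
qed

lemma mv_entry:
  assumes "A \<in> carrier_mat n m" "v \<in> carrier_vec m" "i < n"
  shows "(A *\<^sub>v v) $ i = (\<Sum>k<m. A $$ (i, k) * v $ k)"
  using assms by (auto simp: scalar_prod_def atLeast0LessThan intro!: sum.cong)

lemma quad_form:
  assumes "A \<in> carrier_mat n n" "v \<in> carrier_vec n"
  shows "conjugate v \<bullet> (A *\<^sub>v v) = (\<Sum>p<n. \<Sum>q<n. cnj (v $ p) * A $$ (p, q) * v $ q)"
  using assms by (auto simp: scalar_prod_def atLeast0LessThan mv_entry sum_distrib_left mult.assoc intro!: sum.cong)

lemma unitary_rows:
  assumes "unitary_mat n U" "i < n" "j < n"
  shows "(\<Sum>k<n. U $$ (i,k) * cnj (U $$ (j,k))) = (if i = j then 1 else 0)"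
proof -
  have U: "U \<in> carrier_mat n n" using assms unfolding unitary_mat_def by auto
  have "(U * mat_adjoint U) $$ (i,j) = (\<Sum>k<n. U $$ (i,k) * cnj (U $$ (j,k)))"
    by (subst mult_entry[OF U adj_carrier[OF U] assms(2,3)], auto simp: adj_entry[OF U] assms intro!: sum.cong)
  moreover have "(U * mat_adjoint U) = 1\<^sub>m n" using assms unfolding unitary_mat_def by auto
  ultimately show ?thesis using assms by auto
qed

lemma unitary_cols:
  assumes "unitary_mat n U" "i < n" "j < n"
  shows "(\<Sum>k<n. cnj (U $$ (k,i)) * U $$ (k,j)) = (if i = j then 1 else 0)"
proof -
  have U: "U \<in> carrier_mat n n" using assms unfolding unitary_mat_def by auto
  have "(mat_adjoint U * U) $$ (i,j) = (\<Sum>k<n. cnj (U $$ (k,i)) * U $$ (k,j))"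
    by (subst mult_entry[OF adj_carrier[OF U] U assms(2,3)], auto simp: adj_entry[OF U] assms intro!: sum.cong)
  moreover have "(mat_adjoint U * U) = 1\<^sub>m n" using assms unfolding unitary_mat_def by auto
  ultimately show ?thesis using assms by auto
qed

lemma unitaryI:
  assumes U: "U \<in> carrier_mat n n"
    and c: "\<And>i j. i < n \<Longrightarrow> j < n \<Longrightarrow> (\<Sum>k<n. cnj (U $$ (k,i)) * U $$ (k,j)) = (if i = j then 1 else 0)"
  shows "unitary_mat n U"
proof -
  have 1: "mat_adjoint U * U = 1\<^sub>m n"
  proof (rule eq_matI)
    fix i j assume "i < dim_row (1\<^sub>m n)" "j < dim_col (1\<^sub>m n)"
    hence ij: "i < n" "j < n" by auto
    show "(mat_adjoint U * U) $$ (i, j) = 1\<^sub>m n $$ (i, j)"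
      by (subst mult_entry[OF adj_carrier[OF U] U ij], use c[OF ij] ij in \<open>auto simp: adj_entry[OF U]\<close>)
  qed (use U adj_carrier[OF U] in auto)
  have 2: "U * mat_adjoint U = 1\<^sub>m n"
    by (rule mat_mult_left_right_inverse[OF adj_carrier[OF U] U 1])
  show ?thesis using U 1 2 unfolding unitary_mat_def by auto
qed

lemma adj_mult:
  fixes A B :: "complex mat"
  assumes A: "A \<in> carrier_mat n m" and B: "B \<in> carrier_mat m p"
  shows "mat_adjoint (A * B) = mat_adjoint B * mat_adjoint A"
proof (rule eq_matI)
  have AB: "A * B \<in> carrier_mat n p" using A B by auto
  fix i j assume "i < dim_row (mat_adjoint B * mat_adjoint A)" "j < dim_col (mat_adjoint B * mat_adjoint A)"
  hence ij: "i < p" "j < n" using adj_carrier[OF A] adj_carrier[OF B] by auto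
  show "mat_adjoint (A * B) $$ (i, j) = (mat_adjoint B * mat_adjoint A) $$ (i, j)"
    using ij by (simp add: adj_entry[OF AB] mult_entry[OF adj_carrier[OF B] adj_carrier[OF A] ij]
        mult_entry[OF A B] adj_entry[OF A] adj_entry[OF B] mult.commute)
qed (use adj_carrier[OF A] adj_carrier[OF B] adj_carrier[of "A*B" n p] A B in auto)

lemma adj_adj:
  fixes A :: "complex mat"
  assumes A: "A \<in> carrier_mat n m"
  shows "mat_adjoint (mat_adjoint A) = A"
proof -
  have A1: "mat_adjoint A \<in> carrier_mat m n" by (rule adj_carrier[OF A])
  have A2: "mat_adjoint (mat_adjoint A) \<in> carrier_mat n m" by (rule adj_carrier[OF A1])
  show ?thesis
    by (rule eq_matI, use A A1 A2 in \<open>auto simp: adj_entry[OF A1] adj_entry[OF A]\<close>)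
qed

lemma unitary_mult:
  assumes "unitary_mat n U" "unitary_mat n V"
  shows "unitary_mat n (U * V)"
proof -
  have U: "U \<in> carrier_mat n n" and V: "V \<in> carrier_mat n n" using assms unfolding unitary_mat_def by auto
  have 1: "mat_adjoint (U * V) * (U * V) = 1\<^sub>m n"
  proof -
    have "mat_adjoint (U * V) * (U * V) = mat_adjoint V * (mat_adjoint U * U) * V"
      using U V adj_carrier[OF U] adj_carrier[OF V] by (simp add: adj_mult[OF U V] assoc_mult_mat[of _ n n _ n _ n])
    also have "\<dots> = 1\<^sub>m n" using assms V adj_carrier[OF V] unfolding unitary_mat_def by auto
    finally show ?thesis .
  qed
  have 2: "(U * V) * mat_adjoint (U * V) = 1\<^sub>m n"
    by (rule mat_mult_left_right_inverse[OF adj_carrier _ 1], use U V in auto)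
  show ?thesis using 1 2 U V unfolding unitary_mat_def by auto
qed

lemma sum_sq_split:
  shows "(\<Sum>i<Suc n. f i) = f 0 + (\<Sum>i<n. f (Suc i))"
  by (rule sum.lessThan_Suc_shift)

lemma cnj_sq: "cnj z * z = complex_of_real ((cmod z)^2)"
  by (metis complex_norm_square mult.commute)

lemma alg1: "(d::complex) - c * a * b - c * b * a + c * c * a * b * S = d + a * b * (c * c * S - 2 * c)"
  by (simp add: algebra_simps)

lemma householder:
  fixes y :: "nat \<Rightarrow> complex" and r :: real
  assumes norm1: "(\<Sum>i<Suc n. cnj (y i) * y i) = 1" and y0: "y 0 = complex_of_real r"
  shows "\<exists>V. unitary_mat (Suc n) V \<and> (\<forall>i<Suc n. V $$ (i,0) = y i)"
proof -
  define N where "N = Suc n"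
  define w where "w i = (if i = 0 then 1 else 0) - y i" for i
  define cr :: real where "cr = (if r = 1 then 0 else 1 / (1 - r))"
  define c :: complex where "c = complex_of_real cr"
  define V where "V = mat N N (\<lambda>(i,j). (if i = j then 1 else 0) - c * w i * cnj (w j))"
  have V: "V \<in> carrier_mat N N" unfolding V_def by auto
  have Ve: "V $$ (i,j) = (if i = j then 1 else 0) - c * w i * cnj (w j)" if "i < N" "j < N" for i j
    using that unfolding V_def by auto
  have r1: "y i = (if i = 0 then 1 else 0)" if "r = 1" "i < N" for i
  proof -
    have "(\<Sum>i<Suc n. cnj (y i) * y i) = cnj (y 0) * y 0 + (\<Sum>i<n. cnj (y (Suc i)) * y (Suc i))"
      by (rule sum_sq_split)
    hence "(\<Sum>i<n. cnj (y (Suc i)) * y (Suc i)) = 0" using norm1 y0 that by simp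
    hence "(\<Sum>i<n. complex_of_real ((cmod (y (Suc i)))^2)) = 0"
      by (simp only: cnj_sq)
    hence "(\<Sum>i<n. (cmod (y (Suc i)))^2) = 0" by (metis of_real_eq_0_iff of_real_sum)
    hence "\<forall>i\<in>{..<n}. (cmod (y (Suc i)))^2 = 0" by (subst (asm) sum_nonneg_eq_0_iff) auto
    thus ?thesis using that y0 unfolding N_def by (cases i) auto
  qed
  have S: "c * c * (\<Sum>k<N. cnj (w k) * w k) - 2 * c = 0"
  proof (cases "r = 1")
    case True thus ?thesis unfolding c_def cr_def by simp
  next
    case False
    have "(\<Sum>k<N. cnj (w k) * w k) = cnj (w 0) * w 0 + (\<Sum>k<n. cnj (w (Suc k)) * w (Suc k))"
      unfolding N_def by (rule sum_sq_split)
    also have "(\<Sum>k<n. cnj (w (Suc k)) * w (Suc k)) = (\<Sum>k<n. cnj (y (Suc k)) * y (Suc k))"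
      unfolding w_def by simp
    also have "\<dots> = 1 - cnj (y 0) * y 0" using norm1 sum_sq_split[of "\<lambda>i. cnj (y i) * y i" n]
      by (simp only: eq_diff_eq add.commute)
    finally have "(\<Sum>k<N. cnj (w k) * w k) = complex_of_real (2 * (1 - r))"
      unfolding w_def using y0 by (simp add: algebra_simps power2_eq_square)
    hence "c * c * (\<Sum>k<N. cnj (w k) * w k) - 2 * c = complex_of_real (cr * cr * (2 * (1 - r)) - 2 * cr)"
      unfolding c_def by simp
    also have "cr * cr * (2 * (1 - r)) - 2 * cr = 0"
    proof -
      have "1 - r \<noteq> 0" using False by simp
      hence h: "cr * (1 - r) = 1" unfolding cr_def using False by simp
      have "cr * cr * (2 * (1 - r)) = 2 * cr * (cr * (1 - r))" by (simp add: algebra_simps)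
      thus ?thesis using h by simp
    qed
    finally show ?thesis by simp
  qed
  have unit: "unitary_mat N V"
  proof (rule unitaryI[OF V])
    fix i j assume i: "i < N" and j: "j < N"
    have "(\<Sum>k<N. cnj (V $$ (k,i)) * V $$ (k,j)) =
      (\<Sum>k<N. (if k = i then (if i = j then 1 else 0) else 0)
         - (if k = i then c * w k * cnj (w j) else 0)
         - (if k = j then cnj c * cnj (w k) * w i else 0)
         + (c * cnj c * w i * cnj (w j)) * (cnj (w k) * w k))"
    proof (intro sum.cong refl)
      fix k assume "k \<in> {..<N}"
      hence k: "k < N" by simp
      have e1: "cnj (V $$ (k,i)) = (if k = i then 1 else 0) - cnj c * cnj (w k) * w i"
        using Ve[OF k i] by simp
      have e2: "V $$ (k,j) = (if k = j then 1 else 0) - c * w k * cnj (w j)"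
        using Ve[OF k j] by simp
      show "cnj (V $$ (k,i)) * V $$ (k,j) = (if k = i then (if i = j then 1 else 0) else 0)
         - (if k = i then c * w k * cnj (w j) else 0)
         - (if k = j then cnj c * cnj (w k) * w i else 0)
         + (c * cnj c * w i * cnj (w j)) * (cnj (w k) * w k)"
        unfolding e1 e2 by (cases "k = i"; cases "k = j") (simp_all add: algebra_simps)
    qed
    also have "\<dots> = (if i = j then 1 else 0) - c * w i * cnj (w j) - cnj c * cnj (w j) * w i
        + (c * cnj c * w i * cnj (w j)) * (\<Sum>k<N. cnj (w k) * w k)"
    proof -
      have "\<And>f g h l. (\<Sum>k<N. f k - g k - h k + l k) = (\<Sum>k<N. f k) - (\<Sum>k<N. g k) - (\<Sum>k<N. h k) + (\<Sum>k<N. l k :: complex)"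
        by (simp only: sum.distrib sum_subtractf)
      moreover have "(\<Sum>k<N. (c * cnj c * w i * cnj (w j)) * (cnj (w k) * w k)) = (c * cnj c * w i * cnj (w j)) * (\<Sum>k<N. cnj (w k) * w k)"
        by (rule sum_distrib_left[symmetric])
      ultimately show ?thesis using i j by (simp only: sum.delta finite_lessThan lessThan_iff if_True)
    qed
    also have "cnj c = c" unfolding c_def by simp
    also have "(if i = j then 1 else 0) - c * w i * cnj (w j) - c * cnj (w j) * w i
        + (c * c * w i * cnj (w j)) * (\<Sum>k<N. cnj (w k) * w k)
        = (if i = j then 1 else 0) + (w i * cnj (w j)) * (c * c * (\<Sum>k<N. cnj (w k) * w k) - 2 * c)"
      using alg1[of "if i = j then 1 else 0" c "w i" "cnj (w j)" "\<Sum>k<N. cnj (w k) * w k"] .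
    also have "\<dots> = (if i = j then 1 else 0)" using S by simp
    finally show "(\<Sum>k<N. cnj (V $$ (k,i)) * V $$ (k,j)) = (if i = j then 1 else 0)" .
  qed
  have col: "V $$ (i,0) = y i" if i: "i < N" for i
  proof (cases "r = 1")
    case True
    thus ?thesis using r1[OF True] i Ve[OF i] unfolding N_def w_def c_def cr_def by simp
  next
    case False
    have v: "V $$ (i,0) = (if i = 0 then 1 else 0) - c * w i * (1 - r)"
      using Ve[OF i] y0 unfolding N_def w_def by simp
    have "c * (1 - r) = 1" unfolding c_def cr_def using False by (simp add: field_simps)
    hence h1: "c * w i * (1 - r) = w i" by (metis mult.commute mult.left_commute mult_1_right)
    have h2: "(if i = 0 then 1 else 0) - w i = y i" unfolding w_def by simp
    show ?thesis by (simp only: v h1 h2)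
  qed
  show ?thesis using unit col unfolding N_def by blast
qed

lemma spectral:
  fixes A :: "complex mat"
  assumes "A \<in> carrier_mat n n" "mat_adjoint A = A"
  shows "\<exists>U lam. unitary_mat n U \<and> A = U * real_diag_mat n lam * mat_adjoint U"
  using assms
proof (induction n arbitrary: A)
  case 0
  have "unitary_mat 0 (1\<^sub>m 0)" unfolding unitary_mat_def
    by (auto intro!: eq_matI simp: mat_adjoint_def)
  moreover have "A = 1\<^sub>m 0 * real_diag_mat 0 (\<lambda>_. 0) * mat_adjoint (1\<^sub>m 0)"
    using 0 by (intro eq_matI, auto simp: mat_adjoint_def)
  ultimately show ?case by blast
next
  case (Suc n)
  define N where "N = Suc n"
  have A: "A \<in> carrier_mat N N" and hA: "mat_adjoint A = A" using Suc unfolding N_def by auto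
  from spectrum_non_empty[OF A] obtain \<mu> where "\<mu> \<in> spectrum A" unfolding N_def by auto
  then obtain v where v: "v \<in> carrier_vec N" and v0: "v \<noteq> 0\<^sub>v N" and ev: "A *\<^sub>v v = \<mu> \<cdot>\<^sub>v v"
    unfolding spectrum_def eigenvalue_def eigenvector_def using A by auto
  define s where "s = (\<Sum>i<N. (cmod (v $ i))^2)"
  have "\<exists>i<N. v $ i \<noteq> 0" using v v0 by (metis eq_vecI carrier_vecD index_zero_vec(1,2))
  then obtain i0 where i0: "i0 < N" "v $ i0 \<noteq> 0" by auto
  have s_pos: "s > 0"
  proof -
    have "(cmod (v $ i0))^2 \<le> s" unfolding s_def
      by (rule member_le_sum[of i0 "{..<N}" "\<lambda>i. (cmod (v $ i))^2"], use i0 in auto)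
    moreover have "(cmod (v $ i0))^2 > 0" using i0 by simp
    ultimately show ?thesis by linarith
  qed
  define nv where "nv = sqrt s"
  have nv: "nv > 0" "nv * nv = s" unfolding nv_def using s_pos by auto
  define \<gamma> :: complex where "\<gamma> = (if v $ 0 = 0 then 1 else cnj (v $ 0) / complex_of_real (cmod (v $ 0)))"
  have g1: "cnj \<gamma> * \<gamma> = 1"
  proof (cases "v $ 0 = 0")
    case False
    have "cnj \<gamma> * \<gamma> = (v $ 0 * cnj (v $ 0)) / complex_of_real ((cmod (v $ 0))^2)"
      unfolding \<gamma>_def using False by (simp add: power2_eq_square mult.commute)
    also have "\<dots> = 1" using False by (simp add: complex_norm_square[symmetric])
    finally show ?thesis .
  qed (simp add: \<gamma>_def)
  define y where "y i = \<gamma> * v $ i / complex_of_real nv" for i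
  have y0: "y 0 = complex_of_real (cmod (v $ 0) / nv)"
  proof (cases "v $ 0 = 0")
    case False
    have "\<gamma> * v $ 0 = (cnj (v $ 0) * v $ 0) / complex_of_real (cmod (v $ 0))"
      unfolding \<gamma>_def using False by simp
    also have "\<dots> = complex_of_real (cmod (v $ 0))" using False
      by (simp add: cnj_sq power2_eq_square)
    finally show ?thesis unfolding y_def by simp
  qed (simp add: \<gamma>_def y_def)
  have ynorm: "(\<Sum>i<Suc n. cnj (y i) * y i) = 1"
  proof -
    have "(\<Sum>i<Suc n. cnj (y i) * y i) = (\<Sum>i<N. (cnj \<gamma> * \<gamma>) * (cnj (v $ i) * v $ i) / complex_of_real (nv * nv))"
      unfolding y_def N_def by (intro sum.cong refl) (simp add: algebra_simps)
    also have "\<dots> = (\<Sum>i<N. complex_of_real ((cmod (v $ i))^2)) / complex_of_real s"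
      unfolding g1 nv(2) by (simp add: cnj_sq sum_divide_distrib)
    also have "(\<Sum>i<N. complex_of_real ((cmod (v $ i))^2)) = complex_of_real s"
      unfolding s_def by (simp only: of_real_sum)
    finally show ?thesis using s_pos by simp
  qed
  have Ay: "(\<Sum>l<N. A $$ (k,l) * y l) = \<mu> * y k" if k: "k < N" for k
  proof -
    have "(\<Sum>l<N. A $$ (k,l) * y l) = \<gamma> / complex_of_real nv * (\<Sum>l<N. A $$ (k,l) * v $ l)"
      unfolding y_def by (simp add: sum_distrib_left algebra_simps)
    also have "(\<Sum>l<N. A $$ (k,l) * v $ l) = (A *\<^sub>v v) $ k" using mv_entry[OF A v k] by simp
    also have "\<dots> = \<mu> * v $ k" using ev k v by simp
    finally show ?thesis unfolding y_def by simp
  qed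
  obtain V where V: "unitary_mat N V" and Vc: "\<And>i. i < N \<Longrightarrow> V $$ (i,0) = y i"
    using householder[OF ynorm y0] unfolding N_def by blast
  have Vm: "V \<in> carrier_mat N N" using V unfolding unitary_mat_def by auto
  have Va: "mat_adjoint V \<in> carrier_mat N N" using adj_carrier[OF Vm] .
  define B where "B = mat_adjoint V * A * V"
  have Bm: "B \<in> carrier_mat N N" unfolding B_def using Vm Va A by auto
  have AV: "(A * V) $$ (k,0) = \<mu> * V $$ (k,0)" if "k < N" for k
    using that by (simp add: mult_entry[OF A Vm] Vc Ay)
  have B0: "B $$ (i,0) = (if i = 0 then \<mu> else 0)" if i: "i < N" for i
  proof -
    have "B = mat_adjoint V * (A * V)" unfolding B_def using Vm Va A
      by (simp add: assoc_mult_mat[of _ N N _ N _ N])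
    moreover have "A * V \<in> carrier_mat N N" using A Vm by simp
    ultimately have "B $$ (i,0) = (\<Sum>k<N. mat_adjoint V $$ (i,k) * (A * V) $$ (k,0))"
      using mult_entry[OF Va _ i, of "A * V" N 0] by (simp add: N_def)
    also have "\<dots> = \<mu> * (\<Sum>k<N. cnj (V $$ (k,i)) * V $$ (k,0))"
      using i by (simp add: AV adj_entry[OF Vm] sum_distrib_left algebra_simps)
    also have "\<dots> = (if i = 0 then \<mu> else 0)" using unitary_cols[OF V i, of 0] i unfolding N_def by simp
    finally show ?thesis .
  qed
  have hB: "mat_adjoint B = B"
  proof -
    have VA: "mat_adjoint V * A \<in> carrier_mat N N" using Va A by simp
    have "mat_adjoint B = mat_adjoint V * mat_adjoint (mat_adjoint V * A)"
      unfolding B_def by (rule adj_mult[OF VA Vm])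
    also have "mat_adjoint (mat_adjoint V * A) = mat_adjoint A * mat_adjoint (mat_adjoint V)"
      by (rule adj_mult[OF Va A])
    also have "\<dots> = A * V" unfolding hA adj_adj[OF Vm] ..
    also have "mat_adjoint V * (A * V) = B" unfolding B_def
      by (rule assoc_mult_mat[OF Va A Vm, symmetric])
    finally show ?thesis .
  qed
  have Bsym: "B $$ (i,j) = cnj (B $$ (j,i))" if "i < N" "j < N" for i j
  proof -
    have "B $$ (j,i) = cnj (B $$ (i,j))" using adj_entry[OF Bm that(2,1)] unfolding hB .
    thus ?thesis by (metis complex_cnj_cnj)
  qed
  have b00: "B $$ (0,0) = \<mu>" using B0[of 0] by (simp add: N_def)
  have "B $$ (0,0) = cnj (B $$ (0,0))" by (rule Bsym) (auto simp: N_def)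
  hence muc: "cnj \<mu> = \<mu>" using b00 by metis
  have "Im \<mu> = 0" using arg_cong[OF muc, of Im] by simp
  hence mu_real: "complex_of_real (Re \<mu>) = \<mu>" by (simp add: complex_eq_iff)
  have B0': "B $$ (0,j) = (if j = 0 then \<mu> else 0)" if j: "j < N" for j
  proof -
    have h: "B $$ (0,j) = cnj (B $$ (j,0))" by (rule Bsym) (use j in \<open>auto simp: N_def\<close>)
    have "B $$ (0,j) = cnj (if j = 0 then \<mu> else 0)" by (simp only: h B0[OF j])
    thus ?thesis using muc by simp
  qed
  define A' where "A' = mat n n (\<lambda>(i,j). B $$ (Suc i, Suc j))"
  have A'm: "A' \<in> carrier_mat n n" unfolding A'_def by simp
  have hA': "mat_adjoint A' = A'"
  proof (rule eq_matI)
    fix i j assume "i < dim_row A'" "j < dim_col A'"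
    hence ij: "i < n" "j < n" using A'm by auto
    have "mat_adjoint A' $$ (i, j) = cnj (A' $$ (j, i))" by (rule adj_entry[OF A'm]) (use ij in auto)
    also have "A' $$ (j, i) = B $$ (Suc j, Suc i)" using ij by (simp add: A'_def)
    also have "cnj (B $$ (Suc j, Suc i)) = B $$ (Suc i, Suc j)" by (rule Bsym[symmetric]) (use ij in \<open>auto simp: N_def\<close>)
    finally show "mat_adjoint A' $$ (i, j) = A' $$ (i, j)" using ij by (simp add: A'_def)
  qed (use A'm adj_carrier[OF A'm] in auto)
  from Suc.IH[OF A'm hA'] obtain U' lam' where U': "unitary_mat n U'"
    and A'eq: "A' = U' * real_diag_mat n lam' * mat_adjoint U'" by blast
  have U'm: "U' \<in> carrier_mat n n" using U' unfolding unitary_mat_def by auto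
  define U'' where "U'' = mat N N (\<lambda>(i,j). if i = 0 then (if j = 0 then 1 else 0) else if j = 0 then 0 else U' $$ (i - 1, j - 1))"
  have U''m: "U'' \<in> carrier_mat N N" unfolding U''_def by simp
  have U''e: "U'' $$ (i,j) = (if i = 0 then (if j = 0 then 1 else 0) else if j = 0 then 0 else U' $$ (i - 1, j - 1))"
    if "i < N" "j < N" for i j using that unfolding U''_def by simp
  have U'': "unitary_mat N U''"
  proof (rule unitaryI[OF U''m])
    fix i j assume i: "i < N" and j: "j < N"
    have "(\<Sum>k<N. cnj (U'' $$ (k,i)) * U'' $$ (k,j)) = cnj (U'' $$ (0,i)) * U'' $$ (0,j) + (\<Sum>k<n. cnj (U'' $$ (Suc k,i)) * U'' $$ (Suc k,j))"
      unfolding N_def by (rule sum_sq_split)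
    also have "\<dots> = (if i = j then 1 else 0)"
    proof (cases "i = 0")
      case True thus ?thesis using i j by (simp add: U''e N_def)
    next
      case False
      then obtain i' where i': "i = Suc i'" by (cases i) auto
      show ?thesis
      proof (cases "j = 0")
        case True thus ?thesis using i j False by (simp add: U''e N_def)
      next
        case False
        then obtain j' where j': "j = Suc j'" by (cases j) auto
        have "(\<Sum>k<n. cnj (U'' $$ (Suc k,i)) * U'' $$ (Suc k,j)) = (\<Sum>k<n. cnj (U' $$ (k,i')) * U' $$ (k,j'))"
          using i j i' j' by (intro sum.cong refl) (simp add: U''e N_def)
        also have "\<dots> = (if i' = j' then 1 else 0)" using unitary_cols[OF U', of i' j'] i j i' j' N_def by simp
        finally show ?thesis using i' j' i j by (simp add: U''e N_def)
      qed
    qed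
    finally show "(\<Sum>k<N. cnj (U'' $$ (k,i)) * U'' $$ (k,j)) = (if i = j then 1 else 0)" .
  qed
  define lam where "lam i = (if i = 0 then Re \<mu> else lam' (i - 1))" for i
  have Beq: "B = U'' * real_diag_mat N lam * mat_adjoint U''"
  proof (rule eq_matI)
    fix i j assume "i < dim_row (U'' * real_diag_mat N lam * mat_adjoint U'')"
      "j < dim_col (U'' * real_diag_mat N lam * mat_adjoint U'')"
    hence i: "i < N" and j: "j < N" using U''m adj_carrier[OF U''m] by auto
    have "(U'' * real_diag_mat N lam * mat_adjoint U'') $$ (i,j) = (\<Sum>k<N. U'' $$ (i,k) * complex_of_real (lam k) * cnj (U'' $$ (j,k)))"
      by (rule triple_entry[OF U''m i j])
    also have "\<dots> = U'' $$ (i,0) * complex_of_real (lam 0) * cnj (U'' $$ (j,0)) + (\<Sum>k<n. U'' $$ (i,Suc k) * complex_of_real (lam (Suc k)) * cnj (U'' $$ (j,Suc k)))"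
      unfolding N_def by (rule sum_sq_split)
    also have "\<dots> = B $$ (i,j)"
    proof (cases "i = 0")
      case True thus ?thesis using i j B0' mu_real by (simp add: U''e N_def lam_def)
    next
      case False
      then obtain i' where i': "i = Suc i'" by (cases i) auto
      show ?thesis
      proof (cases "j = 0")
        case True thus ?thesis using i j False B0 by (simp add: U''e N_def)
      next
        case False
        then obtain j' where j': "j = Suc j'" by (cases j) auto
        have "(\<Sum>k<n. U'' $$ (i,Suc k) * complex_of_real (lam (Suc k)) * cnj (U'' $$ (j,Suc k)))
            = (\<Sum>k<n. U' $$ (i',k) * complex_of_real (lam' k) * cnj (U' $$ (j',k)))"
          using i j i' j' by (intro sum.cong refl) (simp add: U''e N_def lam_def)
        also have "\<dots> = A' $$ (i', j')" unfolding A'eq using i j i' j' N_def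
          by (simp add: triple_entry[OF U'm])
        also have "\<dots> = B $$ (i,j)" unfolding A'_def using i j i' j' N_def by simp
        finally show ?thesis using i' j' i j by (simp add: U''e N_def)
      qed
    qed
    finally show "B $$ (i, j) = (U'' * real_diag_mat N lam * mat_adjoint U'') $$ (i, j)" by simp
  qed (use Bm U''m adj_carrier[OF U''m] in auto)
  have VV: "V * mat_adjoint V = 1\<^sub>m N" using V unfolding unitary_mat_def by auto
  have AVB: "A = V * B * mat_adjoint V"
  proof -
    have "V * B * mat_adjoint V = (V * mat_adjoint V) * A * (V * mat_adjoint V)"
      unfolding B_def using Vm Va A
      by (simp add: assoc_mult_mat[of _ N N _ N _ N])
    thus ?thesis using A by (simp add: VV)
  qed
  have U''a: "mat_adjoint U'' \<in> carrier_mat N N" using adj_carrier[OF U''m] .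
  have D: "real_diag_mat N lam \<in> carrier_mat N N" by simp
  have "A = (V * U'') * real_diag_mat N lam * mat_adjoint (V * U'')"
  proof -
    let ?D = "real_diag_mat N lam"
    have c1: "U'' * ?D \<in> carrier_mat N N" using U''m D by simp
    have c2: "V * (U'' * ?D) \<in> carrier_mat N N" using Vm c1 by simp
    have "V * (U'' * ?D * mat_adjoint U'') * mat_adjoint V = (V * (U'' * ?D) * mat_adjoint U'') * mat_adjoint V"
      using assoc_mult_mat[OF Vm c1 U''a] by simp
    also have "\<dots> = V * (U'' * ?D) * (mat_adjoint U'' * mat_adjoint V)"
      by (rule assoc_mult_mat[OF c2 U''a Va])
    also have "V * (U'' * ?D) = V * U'' * ?D" by (rule assoc_mult_mat[OF Vm U''m D, symmetric])
    finally show ?thesis unfolding AVB Beq adj_mult[OF Vm U''m] .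
  qed
  moreover have "unitary_mat N (V * U'')" by (rule unitary_mult[OF V U''])
  ultimately show ?case unfolding N_def by blast
qed

lemma pos_part_spec:
  fixes A :: "complex mat"
  assumes A: "A \<in> carrier_mat n n" and h: "mat_adjoint A = A"
  shows "\<exists>U lam. unitary_mat n U \<and> A = U * real_diag_mat n lam * mat_adjoint U
     \<and> pos_part A = U * real_diag_mat n (\<lambda>i. max (lam i) 0) * mat_adjoint U"
proof -
  have dr: "dim_row A = n" using A by simp
  obtain U lam where U: "unitary_mat n U" and AU: "A = U * real_diag_mat n lam * mat_adjoint U"
    using spectral[OF A h] by blast
  have ex: "\<exists>P U lam. unitary_mat (dim_row A) U
        \<and> A = U * real_diag_mat (dim_row A) lam * mat_adjoint U
        \<and> P = U * real_diag_mat (dim_row A) (\<lambda>i. max (lam i) 0) * mat_adjoint U"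
    unfolding dr
    apply (rule exI[of _ "U * real_diag_mat n (\<lambda>i. max (lam i) 0) * mat_adjoint U"])
    apply (rule exI[of _ U], rule exI[of _ lam])
    by (intro conjI U AU refl)
  have "\<exists>U lam. unitary_mat (dim_row A) U
        \<and> A = U * real_diag_mat (dim_row A) lam * mat_adjoint U
        \<and> pos_part A = U * real_diag_mat (dim_row A) (\<lambda>i. max (lam i) 0) * mat_adjoint U"
    unfolding pos_part_def by (rule someI_ex[OF ex])
  thus ?thesis unfolding dr .
qed

lemma sq_cnj: "z * cnj z = complex_of_real ((cmod z)^2)"
  by (metis complex_norm_square)

lemma triple_carrier: "U \<in> carrier_mat n n \<Longrightarrow> U * real_diag_mat n f * mat_adjoint U \<in> carrier_mat n n"
  by (meson adj_carrier mult_carrier_mat rdm_carrier)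

lemma unitary_carrier: "unitary_mat n U \<Longrightarrow> U \<in> carrier_mat n n"
  unfolding unitary_mat_def by auto

lemma trace_triple:
  assumes U: "unitary_mat n U"
  shows "mtrace (U * real_diag_mat n f * mat_adjoint U) = complex_of_real (\<Sum>k<n. f k)"
proof -
  have Um: "U \<in> carrier_mat n n" by (rule unitary_carrier[OF U])
  have "mtrace (U * real_diag_mat n f * mat_adjoint U) = (\<Sum>i<n. \<Sum>k<n. U $$ (i,k) * complex_of_real (f k) * cnj (U $$ (i,k)))"
    unfolding mtrace_def using triple_carrier[OF Um, of f] by (auto intro!: sum.cong simp: triple_entry[OF Um])
  also have "\<dots> = (\<Sum>k<n. complex_of_real (f k) * (\<Sum>i<n. U $$ (i,k) * cnj (U $$ (i,k))))"
    by (subst sum.swap) (simp add: sum_distrib_left mult_ac)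
  also have "\<dots> = (\<Sum>k<n. complex_of_real (f k))"
  proof (rule sum.cong[OF refl])
    fix k assume k: "k \<in> {..<n}"
    have "(\<Sum>i<n. U $$ (i,k) * cnj (U $$ (i,k))) = (\<Sum>i<n. cnj (U $$ (i,k)) * U $$ (i,k))" by (simp add: mult.commute)
    also have "\<dots> = 1" using unitary_cols[OF U, of k k] k by simp
    finally show "complex_of_real (f k) * (\<Sum>i<n. U $$ (i,k) * cnj (U $$ (i,k))) = complex_of_real (f k)" by simp
  qed
  finally show ?thesis by simp
qed

definition qf :: "nat \<Rightarrow> complex mat \<Rightarrow> nat \<Rightarrow> complex mat \<Rightarrow> complex" where
  "qf n U i X = (\<Sum>s<n. \<Sum>t<n. cnj (U $$ (s,i)) * X $$ (s,t) * U $$ (t,i))"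

lemma qf_triple:
  assumes U: "unitary_mat n U" and i: "i < n"
  shows "qf n U i (U * real_diag_mat n f * mat_adjoint U) = complex_of_real (f i)"
proof -
  have Um: "U \<in> carrier_mat n n" by (rule unitary_carrier[OF U])
  let ?M = "U * real_diag_mat n f * mat_adjoint U"
  have M: "?M \<in> carrier_mat n n" using triple_carrier[OF Um] .
  have "qf n U i ?M = (\<Sum>s<n. \<Sum>t<n. \<Sum>k<n. (cnj (U $$ (s,i)) * U $$ (s,k)) * complex_of_real (f k) * (cnj (U $$ (t,k)) * U $$ (t,i)))"
    unfolding qf_def by (intro sum.cong refl) (simp add: triple_entry[OF Um] sum_distrib_left sum_distrib_right mult_ac)
  also have "\<dots> = (\<Sum>k<n. (\<Sum>s<n. cnj (U $$ (s,i)) * U $$ (s,k)) * complex_of_real (f k) * (\<Sum>t<n. cnj (U $$ (t,k)) * U $$ (t,i)))"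
    apply (subst sum.swap)
    apply (subst (2) sum.swap)
    by (simp add: sum_distrib_left sum_distrib_right mult_ac)
  also have "\<dots> = (\<Sum>k<n. if k = i then complex_of_real (f i) else 0)"
    by (intro sum.cong refl) (simp add: unitary_cols[OF U] i)
  also have "\<dots> = complex_of_real (f i)" using i by simp
  finally show ?thesis .
qed

lemma maxsum_le:
  fixes x y :: "nat \<Rightarrow> real" and M :: "nat \<Rightarrow> nat \<Rightarrow> real"
  assumes xy: "\<And>i. i < n \<Longrightarrow> x i = (\<Sum>k<n. M i k * y k)"
    and Mpos: "\<And>i k. i < n \<Longrightarrow> k < n \<Longrightarrow> M i k \<ge> 0"
    and Mcol: "\<And>k. k < n \<Longrightarrow> (\<Sum>i<n. M i k) = 1"
  shows "(\<Sum>i<n. max (x i) 0) \<le> (\<Sum>k<n. max (y k) 0)"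
proof -
  have "max (x i) 0 \<le> (\<Sum>k<n. M i k * max (y k) 0)" if i: "i < n" for i
  proof -
    have "x i \<le> (\<Sum>k<n. M i k * max (y k) 0)" unfolding xy[OF i]
      by (rule sum_mono) (use Mpos i in \<open>auto intro: mult_left_mono\<close>)
    moreover have "0 \<le> (\<Sum>k<n. M i k * max (y k) 0)"
      by (rule sum_nonneg) (use Mpos i in auto)
    ultimately show ?thesis by simp
  qed
  hence "(\<Sum>i<n. max (x i) 0) \<le> (\<Sum>i<n. \<Sum>k<n. M i k * max (y k) 0)" by (intro sum_mono) auto
  also have "\<dots> = (\<Sum>k<n. (\<Sum>i<n. M i k) * max (y k) 0)"
    by (subst sum.swap) (simp add: sum_distrib_right)
  also have "\<dots> = (\<Sum>k<n. max (y k) 0)" using Mcol by simp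
  finally show ?thesis .
qed

lemma rdm_adj: "mat_adjoint (real_diag_mat n d) = real_diag_mat n d"
proof (rule eq_matI)
  fix i j assume "i < dim_row (real_diag_mat n d)" "j < dim_col (real_diag_mat n d)"
  hence ij: "i < n" "j < n" by (auto simp: real_diag_mat_def)
  show "mat_adjoint (real_diag_mat n d) $$ (i, j) = real_diag_mat n d $$ (i, j)"
    using ij by (simp add: adj_entry[OF rdm_carrier] rdm_entry)
qed (use adj_carrier[OF rdm_carrier, of n d] in \<open>auto simp: real_diag_mat_def\<close>)

lemma E_diag:
  shows "Re (mtrace (pos_part (real_diag_mat n d))) = (\<Sum>k<n. max (d k) 0)"
proof -
  let ?A = "real_diag_mat n d"
  obtain U lam where U: "unitary_mat n U" and Aeq: "?A = U * real_diag_mat n lam * mat_adjoint U"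
    and P: "pos_part ?A = U * real_diag_mat n (\<lambda>i. max (lam i) 0) * mat_adjoint U"
    using pos_part_spec[OF rdm_carrier rdm_adj] by blast
  have Um: "U \<in> carrier_mat n n" by (rule unitary_carrier[OF U])
  define W where "W k i = (cmod (U $$ (k,i)))^2" for k i
  have Wpos: "W k i \<ge> 0" for k i unfolding W_def by simp
  have Wrow: "(\<Sum>i<n. W k i) = 1" if k: "k < n" for k
  proof -
    have "complex_of_real (\<Sum>i<n. W k i) = (\<Sum>i<n. U $$ (k,i) * cnj (U $$ (k,i)))"
      unfolding W_def by (simp add: sq_cnj)
    also have "\<dots> = 1" using unitary_rows[OF U k k] by simp
    finally show ?thesis by (metis of_real_eq_1_iff)
  qed
  have Wcol: "(\<Sum>k<n. W k i) = 1" if i: "i < n" for i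
  proof -
    have "complex_of_real (\<Sum>k<n. W k i) = (\<Sum>k<n. cnj (U $$ (k,i)) * U $$ (k,i))"
      unfolding W_def by (simp add: cnj_sq)
    also have "\<dots> = 1" using unitary_cols[OF U i i] by simp
    finally show ?thesis by (metis of_real_eq_1_iff)
  qed
  have d_eq: "d k = (\<Sum>i<n. W k i * lam i)" if k: "k < n" for k
  proof -
    have "complex_of_real (d k) = ?A $$ (k,k)" using k by (simp add: rdm_entry)
    also have "\<dots> = (\<Sum>i<n. U $$ (k,i) * complex_of_real (lam i) * cnj (U $$ (k,i)))"
      by (subst Aeq, rule triple_entry[OF Um k k])
    also have "\<dots> = (\<Sum>i<n. complex_of_real (W k i * lam i))"
    proof (rule sum.cong[OF refl])
      fix i
      have "U $$ (k,i) * complex_of_real (lam i) * cnj (U $$ (k,i)) = complex_of_real (lam i) * (U $$ (k,i) * cnj (U $$ (k,i)))"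
        by (simp add: mult_ac)
      also have "\<dots> = complex_of_real (W k i * lam i)" unfolding sq_cnj W_def by simp
      finally show "U $$ (k,i) * complex_of_real (lam i) * cnj (U $$ (k,i)) = complex_of_real (W k i * lam i)" .
    qed
    also have "\<dots> = complex_of_real (\<Sum>i<n. W k i * lam i)" by (simp only: of_real_sum)
    finally show ?thesis by (metis of_real_eq_iff)
  qed
  have lam_eq: "lam i = (\<Sum>k<n. W k i * d k)" if i: "i < n" for i
  proof -
    have "qf n U i ?A = complex_of_real (lam i)" by (subst Aeq) (rule qf_triple[OF U i])
    hence "complex_of_real (lam i) = qf n U i ?A" by simp
    also have "\<dots> = (\<Sum>s<n. \<Sum>t<n. if t = s then cnj (U $$ (s,i)) * complex_of_real (d s) * U $$ (s,i) else 0)"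
      unfolding qf_def by (intro sum.cong refl) (auto simp: rdm_entry)
    also have "\<dots> = (\<Sum>s<n. cnj (U $$ (s,i)) * complex_of_real (d s) * U $$ (s,i))" by simp
    also have "\<dots> = (\<Sum>k<n. complex_of_real (W k i * d k))"
    proof (rule sum.cong[OF refl])
      fix s
      have "cnj (U $$ (s,i)) * complex_of_real (d s) * U $$ (s,i) = complex_of_real (d s) * (cnj (U $$ (s,i)) * U $$ (s,i))"
        by (simp add: mult_ac)
      also have "\<dots> = complex_of_real (W s i * d s)" unfolding cnj_sq W_def by simp
      finally show "cnj (U $$ (s,i)) * complex_of_real (d s) * U $$ (s,i) = complex_of_real (W s i * d s)" .
    qed
    also have "\<dots> = complex_of_real (\<Sum>k<n. W k i * d k)" by (simp only: of_real_sum)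
    finally show ?thesis by (metis of_real_eq_iff)
  qed
  have "Re (mtrace (pos_part ?A)) = (\<Sum>i<n. max (lam i) 0)"
    unfolding P trace_triple[OF U] by simp
  moreover have "(\<Sum>i<n. max (lam i) 0) \<le> (\<Sum>k<n. max (d k) 0)"
    by (rule maxsum_le[of n lam "\<lambda>i k. W k i" d]) (use lam_eq Wpos Wrow in auto)
  moreover have "(\<Sum>k<n. max (d k) 0) \<le> (\<Sum>i<n. max (lam i) 0)"
    by (rule maxsum_le[of n d W lam]) (use d_eq Wpos Wcol in auto)
  ultimately show ?thesis by linarith
qed

definition ell :: "nat \<Rightarrow> complex mat \<Rightarrow> (nat \<Rightarrow> nat \<Rightarrow> real) \<Rightarrow> nat \<Rightarrow> complex mat \<Rightarrow> complex" where
  "ell n U c r X = (\<Sum>i<n. complex_of_real (c r i) * qf n U i X)"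

definition chan :: "nat \<Rightarrow> complex mat \<Rightarrow> (nat \<Rightarrow> nat \<Rightarrow> real) \<Rightarrow> complex mat \<Rightarrow> complex mat" where
  "chan n U c X = mat 2 2 (\<lambda>(r,s). if r = s then ell n U c r X else 0)"

lemma chan_carrier[simp]: "chan n U c X \<in> carrier_mat 2 2"
  unfolding chan_def by simp

lemma chan_dims[simp]: "dim_row (chan n U c X) = 2" "dim_col (chan n U c X) = 2"
  unfolding chan_def by simp_all

lemma chan_entry: "r < 2 \<Longrightarrow> s < 2 \<Longrightarrow> chan n U c X $$ (r,s) = (if r = s then ell n U c r X else 0)"
  unfolding chan_def by simp

lemma qf_lin:
  fixes X Y :: "complex mat"
  assumes "X \<in> carrier_mat n n" "Y \<in> carrier_mat n n"
  shows "qf n U i (a \<cdot>\<^sub>m X + b \<cdot>\<^sub>m Y) = a * qf n U i X + b * qf n U i Y"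
  unfolding qf_def using assms
  by (simp add: sum_distrib_left sum.distrib algebra_simps)

lemma ell_lin:
  fixes X Y :: "complex mat"
  assumes "X \<in> carrier_mat n n" "Y \<in> carrier_mat n n"
  shows "ell n U c r (a \<cdot>\<^sub>m X + b \<cdot>\<^sub>m Y) = a * ell n U c r X + b * ell n U c r Y"
  unfolding ell_def qf_lin[OF assms]
  by (simp add: sum_distrib_left sum.distrib algebra_simps)

lemma chan_linear: "linear_map_on n 2 (chan n U c)"
  unfolding linear_map_on_def
proof (intro conjI ballI allI)
  fix X Y :: "complex mat" and a b assume X: "X \<in> carrier_mat n n" and Y: "Y \<in> carrier_mat n n"
  show "chan n U c (a \<cdot>\<^sub>m X + b \<cdot>\<^sub>m Y) = a \<cdot>\<^sub>m chan n U c X + b \<cdot>\<^sub>m chan n U c Y"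
    by (rule eq_matI) (auto simp: chan_entry ell_lin[OF X Y])
qed simp

lemma qf_sum_trace:
  assumes U: "unitary_mat n U" and X: "X \<in> carrier_mat n n"
  shows "(\<Sum>i<n. qf n U i X) = mtrace X"
proof -
  have "(\<Sum>i<n. qf n U i X) = (\<Sum>s<n. \<Sum>t<n. X $$ (s,t) * (\<Sum>i<n. U $$ (t,i) * cnj (U $$ (s,i))))"
  proof -
    have "(\<Sum>i<n. qf n U i X) = (\<Sum>i<n. \<Sum>s<n. \<Sum>t<n. cnj (U $$ (s,i)) * X $$ (s,t) * U $$ (t,i))"
      unfolding qf_def ..
    also have "\<dots> = (\<Sum>s<n. \<Sum>i<n. \<Sum>t<n. cnj (U $$ (s,i)) * X $$ (s,t) * U $$ (t,i))"
      by (rule sum.swap)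
    also have "\<dots> = (\<Sum>s<n. \<Sum>t<n. \<Sum>i<n. cnj (U $$ (s,i)) * X $$ (s,t) * U $$ (t,i))"
      by (rule sum.cong[OF refl], rule sum.swap)
    also have "\<dots> = (\<Sum>s<n. \<Sum>t<n. X $$ (s,t) * (\<Sum>i<n. U $$ (t,i) * cnj (U $$ (s,i))))"
      by (simp add: sum_distrib_left mult_ac)
    finally show ?thesis .
  qed
  also have "\<dots> = (\<Sum>s<n. \<Sum>t<n. if t = s then X $$ (s,s) else 0)"
    by (intro sum.cong refl) (simp add: unitary_rows[OF U])
  also have "\<dots> = mtrace X" unfolding mtrace_def using X by simp
  finally show ?thesis .
qed

lemma chan_tp:
  assumes U: "unitary_mat n U" and c: "\<And>i. i < n \<Longrightarrow> c 0 i + c 1 i = 1"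
  shows "trace_preserving n (chan n U c)"
  unfolding trace_preserving_def
proof
  fix X :: "complex mat" assume X: "X \<in> carrier_mat n n"
  have "mtrace (chan n U c X) = ell n U c 0 X + ell n U c 1 X"
    unfolding mtrace_def by (simp add: chan_entry numeral_2_eq_2)
  also have "\<dots> = (\<Sum>i<n. complex_of_real (c 0 i + c 1 i) * qf n U i X)"
    unfolding ell_def by (simp add: sum.distrib algebra_simps)
  also have "\<dots> = (\<Sum>i<n. qf n U i X)" using c by simp
  also have "\<dots> = mtrace X" by (rule qf_sum_trace[OF U X])
  finally show "mtrace (chan n U c X) = mtrace X" .
qed

lemma sum_split_nat:
  fixes k m :: nat and f :: "nat \<Rightarrow> 'a::comm_monoid_add"
  shows "(\<Sum>x<k * m. f x) = (\<Sum>a<k. \<Sum>s<m. f (a * m + s))"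
proof (induction k)
  case (Suc k)
  have "(\<Sum>x<Suc k * m. f x) = (\<Sum>x<k * m. f x) + (\<Sum>x\<in>{k*m..<k*m+m}. f x)"
    by (simp add: add.commute sum.atLeastLessThan_concat[symmetric] atLeast0LessThan[symmetric])
  also have "(\<Sum>x\<in>{k*m..<k*m+m}. f x) = (\<Sum>s<m. f (k * m + s))"
  proof -
    have "sum f {0 + k*m..<m + k*m} = sum (\<lambda>i. f (i + k*m)) {0..<m}" by (rule sum.shift_bounds_nat_ivl)
    thus ?thesis by (simp add: atLeast0LessThan add.commute)
  qed
  finally show ?case using Suc by simp
qed simp

lemma idx_lt: "a < k \<Longrightarrow> s < n \<Longrightarrow> a * n + s < k * (n::nat)"
proof -
  assume "a < k" "s < n"
  hence "a * n + s < a * n + n" by simp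
  also have "\<dots> = Suc a * n" by simp
  also have "\<dots> \<le> k * n" using \<open>a < k\<close> by (intro mult_right_mono) auto
  finally show ?thesis .
qed

definition Gb :: "nat \<Rightarrow> complex mat \<Rightarrow> complex mat \<Rightarrow> nat \<Rightarrow> nat \<Rightarrow> nat \<Rightarrow> complex" where
  "Gb n U X i a b = (\<Sum>s<n. \<Sum>t<n. cnj (U $$ (s,i)) * X $$ (a * n + s, b * n + t) * U $$ (t,i))"

lemma ell_block: "ell n U c r (block_of n X a b) = (\<Sum>i<n. complex_of_real (c r i) * Gb n U X i a b)"
  unfolding ell_def qf_def Gb_def block_of_def by (intro sum.cong refl) simp

lemma amp_entry:
  assumes "p < k * 2" "q < k * 2"
  shows "ampliate k n 2 (chan n U c) X $$ (p,q) =
    (if p mod 2 = q mod 2 then ell n U c (p mod 2) (block_of n X (p div 2) (q div 2)) else 0)"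
  using assms unfolding ampliate_def by (simp add: chan_entry)

lemma amp_carrier: "ampliate k n 2 (chan n U c) X \<in> carrier_mat (k * 2) (k * 2)"
  unfolding ampliate_def by simp

lemma herm_entry:
  fixes X :: "complex mat"
  assumes X: "X \<in> carrier_mat N N" and h: "mat_adjoint X = X" and "x < N" "y < N"
  shows "X $$ (x,y) = cnj (X $$ (y,x))"
proof -
  have "mat_adjoint X $$ (x,y) = cnj (X $$ (y,x))" by (rule adj_entry[OF X]) (use assms in auto)
  thus ?thesis unfolding h .
qed

lemma Gb_cnj:
  fixes X :: "complex mat"
  assumes X: "X \<in> carrier_mat (k*n) (k*n)" and h: "mat_adjoint X = X" and a: "a < k" and b: "b < k"
  shows "cnj (Gb n U X i b a) = Gb n U X i a b"
proof -
  have "cnj (Gb n U X i b a) = (\<Sum>s<n. \<Sum>t<n. U $$ (s,i) * cnj (X $$ (b * n + s, a * n + t)) * cnj (U $$ (t,i)))"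
    unfolding Gb_def by simp
  also have "\<dots> = (\<Sum>s<n. \<Sum>t<n. U $$ (s,i) * X $$ (a * n + t, b * n + s) * cnj (U $$ (t,i)))"
    by (intro sum.cong refl) (simp add: herm_entry[OF X h, of "a * n + _" "b * n + _"] idx_lt a b)
  also have "\<dots> = (\<Sum>t<n. \<Sum>s<n. U $$ (s,i) * X $$ (a * n + t, b * n + s) * cnj (U $$ (t,i)))"
    by (rule sum.swap)
  also have "\<dots> = Gb n U X i a b" unfolding Gb_def by (intro sum.cong refl) (simp add: mult_ac)
  finally show ?thesis .
qed

lemma dm_div: "s < (n::nat) \<Longrightarrow> (a * n + s) div n = a"
  by (simp add: add.commute)
lemma dm_mod: "s < (n::nat) \<Longrightarrow> (a * n + s) mod n = s"
  by (simp add: add.commute)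

lemma chan_cp:
  assumes cpos: "\<And>r i. c r i \<ge> 0"
  shows "completely_positive n 2 (chan n U c)"
  unfolding completely_positive_def
proof (intro allI ballI impI)
  fix k and X :: "complex mat"
  assume X: "X \<in> carrier_mat (k * n) (k * n)" and pX: "psd X"
  let ?M = "ampliate k n 2 (chan n U c) X"
  have M: "?M \<in> carrier_mat (k * 2) (k * 2)" by (rule amp_carrier)
  have hX: "mat_adjoint X = X" using pX X unfolding psd_def hermitian_def by auto
  have Ma: "mat_adjoint ?M \<in> carrier_mat (k * 2) (k * 2)" by (rule adj_carrier[OF M])
  have hM: "mat_adjoint ?M = ?M"
  proof (rule eq_matI)
    fix p q assume "p < dim_row ?M" "q < dim_col ?M"
    hence p: "p < k * 2" and q: "q < k * 2" using M by auto
    have pk: "p div 2 < k" and qk: "q div 2 < k" using p q by auto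
    have "mat_adjoint ?M $$ (p,q) = cnj (?M $$ (q,p))" by (rule adj_entry[OF M p q])
    also have "\<dots> = ?M $$ (p,q)"
      unfolding amp_entry[OF p q] amp_entry[OF q p] ell_block
      using Gb_cnj[OF X hX pk qk] by auto
    finally show "mat_adjoint ?M $$ (p,q) = ?M $$ (p,q)" .
  qed (use M Ma in auto)
  have quad: "(Im (conjugate v \<bullet> (?M *\<^sub>v v)) = 0) \<and> Re (conjugate v \<bullet> (?M *\<^sub>v v)) \<ge> 0"
    if v: "v \<in> carrier_vec (k * 2)" for v
  proof -
    define w where "w r i = vec (k * n) (\<lambda>x. v $ (x div n * 2 + r) * U $$ (x mod n, i))" for r i
    have w: "w r i \<in> carrier_vec (k * n)" for r i unfolding w_def by simp
    have wpsd: "Im (conjugate (w r i) \<bullet> (X *\<^sub>v w r i)) = 0 \<and> Re (conjugate (w r i) \<bullet> (X *\<^sub>v w r i)) \<ge> 0" for r i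
      using pX w[of r i] X unfolding psd_def by auto
    define H where "H r i = (\<Sum>a<k. \<Sum>b<k. cnj (v $ (a * 2 + r)) * Gb n U X i a b * v $ (b * 2 + r))" for r i
    have Mab: "?M $$ (a * 2 + r, b * 2 + r') = (if r = r' then ell n U c r (block_of n X a b) else 0)"
      if "a < k" "b < k" "r < 2" "r' < 2" for a b r r'
    proof -
      have "a * 2 + r < k * 2" "b * 2 + r' < k * 2" using idx_lt that by auto
      thus ?thesis unfolding amp_entry[OF \<open>a * 2 + r < k * 2\<close> \<open>b * 2 + r' < k * 2\<close>]
        using that by (simp add: dm_div dm_mod)
    qed
    have "conjugate v \<bullet> (?M *\<^sub>v v) = (\<Sum>p<k * 2. \<Sum>q<k * 2. cnj (v $ p) * ?M $$ (p, q) * v $ q)"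
      by (rule quad_form[OF M v])
    also have "\<dots> = (\<Sum>a<k. \<Sum>r<2. \<Sum>b<k. \<Sum>r'<2. cnj (v $ (a*2+r)) * ?M $$ (a*2+r, b*2+r') * v $ (b*2+r'))"
      by (simp only: sum_split_nat)
    also have "\<dots> = (\<Sum>a<k. \<Sum>r<2. \<Sum>b<k. cnj (v $ (a*2+r)) * ell n U c r (block_of n X a b) * v $ (b*2+r))"
    proof (intro sum.cong refl)
      fix a r b :: nat assume a: "a \<in> {..<k}" and r: "r \<in> {..<2}" and b: "b \<in> {..<k}"
      have "(\<Sum>r'<2. cnj (v $ (a*2+r)) * ?M $$ (a*2+r, b*2+r') * v $ (b*2+r'))
          = (\<Sum>r'<2. if r' = r then cnj (v $ (a*2+r)) * ell n U c r (block_of n X a b) * v $ (b*2+r) else 0)"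
        by (rule sum.cong[OF refl]) (use a b r in \<open>auto simp: Mab\<close>)
      also have "\<dots> = cnj (v $ (a*2+r)) * ell n U c r (block_of n X a b) * v $ (b*2+r)" using r by simp
      finally show "(\<Sum>r'<2. cnj (v $ (a*2+r)) * ?M $$ (a*2+r, b*2+r') * v $ (b*2+r'))
          = cnj (v $ (a*2+r)) * ell n U c r (block_of n X a b) * v $ (b*2+r)" .
    qed
    also have "\<dots> = (\<Sum>r<2. \<Sum>a<k. \<Sum>b<k. cnj (v $ (a*2+r)) * ell n U c r (block_of n X a b) * v $ (b*2+r))"
      by (rule sum.swap)
    also have "\<dots> = (\<Sum>r<2. \<Sum>a<k. \<Sum>b<k. \<Sum>i<n. complex_of_real (c r i) * (cnj (v $ (a*2+r)) * Gb n U X i a b * v $ (b*2+r)))"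
      unfolding ell_block by (simp add: sum_distrib_left sum_distrib_right mult_ac)
    also have "\<dots> = (\<Sum>r<2. \<Sum>a<k. \<Sum>i<n. \<Sum>b<k. complex_of_real (c r i) * (cnj (v $ (a*2+r)) * Gb n U X i a b * v $ (b*2+r)))"
      by (rule sum.cong[OF refl], rule sum.cong[OF refl], rule sum.swap)
    also have "\<dots> = (\<Sum>r<2. \<Sum>i<n. \<Sum>a<k. \<Sum>b<k. complex_of_real (c r i) * (cnj (v $ (a*2+r)) * Gb n U X i a b * v $ (b*2+r)))"
      by (rule sum.cong[OF refl], rule sum.swap)
    also have "\<dots> = (\<Sum>r<2. \<Sum>i<n. complex_of_real (c r i) * H r i)"
      unfolding H_def by (simp add: sum_distrib_left)
    finally have eq1: "conjugate v \<bullet> (?M *\<^sub>v v) = (\<Sum>r<2. \<Sum>i<n. complex_of_real (c r i) * H r i)" .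
    have HQ: "H r i = conjugate (w r i) \<bullet> (X *\<^sub>v w r i)" for r i
    proof -
      have wa: "w r i $ (a * n + s) = v $ (a * 2 + r) * U $$ (s, i)" if "a < k" "s < n" for a s
        unfolding w_def using that idx_lt[OF that] by (simp add: dm_div dm_mod)
      have "conjugate (w r i) \<bullet> (X *\<^sub>v w r i) = (\<Sum>x<k*n. \<Sum>y<k*n. cnj (w r i $ x) * X $$ (x, y) * w r i $ y)"
        by (rule quad_form[OF X w])
      also have "\<dots> = (\<Sum>a<k. \<Sum>s<n. \<Sum>b<k. \<Sum>t<n. cnj (w r i $ (a*n+s)) * X $$ (a*n+s, b*n+t) * w r i $ (b*n+t))"
        by (simp only: sum_split_nat)
      also have "\<dots> = (\<Sum>a<k. \<Sum>s<n. \<Sum>b<k. \<Sum>t<n. cnj (v $ (a*2+r)) * (cnj (U $$ (s,i)) * X $$ (a*n+s, b*n+t) * U $$ (t,i)) * v $ (b*2+r))"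
        by (intro sum.cong refl) (simp add: wa mult_ac)
      also have "\<dots> = (\<Sum>a<k. \<Sum>b<k. \<Sum>s<n. \<Sum>t<n. cnj (v $ (a*2+r)) * (cnj (U $$ (s,i)) * X $$ (a*n+s, b*n+t) * U $$ (t,i)) * v $ (b*2+r))"
        by (rule sum.cong[OF refl], rule sum.swap)
      also have "\<dots> = H r i" unfolding H_def Gb_def by (simp add: sum_distrib_left sum_distrib_right)
      finally show ?thesis by simp
    qed
    have "Im (conjugate v \<bullet> (?M *\<^sub>v v)) = (\<Sum>r<2. \<Sum>i<n. c r i * Im (H r i))"
      unfolding eq1 by (simp add: Im_sum)
    also have "\<dots> = 0" using wpsd unfolding HQ by simp
    finally have "Im (conjugate v \<bullet> (?M *\<^sub>v v)) = 0" .
    moreover have "Re (conjugate v \<bullet> (?M *\<^sub>v v)) = (\<Sum>r<2. \<Sum>i<n. c r i * Re (H r i))"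
      unfolding eq1 by (simp add: Re_sum)
    moreover have "(\<Sum>r<2. \<Sum>i<n. c r i * Re (H r i)) \<ge> 0"
      using wpsd cpos unfolding HQ by (intro sum_nonneg mult_nonneg_nonneg) auto
    ultimately show ?thesis by simp
  qed
  show "psd ?M" unfolding psd_def hermitian_def using M hM quad by auto
qed

lemma density_carrier: "density_op n \<rho> \<Longrightarrow> \<rho> \<in> carrier_mat n n"
  unfolding density_op_def by auto

lemma density_herm: "density_op n \<rho> \<Longrightarrow> mat_adjoint \<rho> = \<rho>"
  unfolding density_op_def psd_def hermitian_def by auto

lemma density_qf:
  assumes r: "density_op n \<rho>" and U: "unitary_mat n U" and i: "i < n"
  shows "Im (qf n U i \<rho>) = 0 \<and> Re (qf n U i \<rho>) \<ge> 0"
proof -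
  have Um: "U \<in> carrier_mat n n" by (rule unitary_carrier[OF U])
  have rm: "\<rho> \<in> carrier_mat n n" by (rule density_carrier[OF r])
  have cv: "col U i \<in> carrier_vec n" using col_dim[of U i] Um by simp
  have "qf n U i \<rho> = conjugate (col U i) \<bullet> (\<rho> *\<^sub>v col U i)"
    unfolding quad_form[OF rm cv] qf_def using Um i by (intro sum.cong refl) auto
  moreover have "Im (conjugate (col U i) \<bullet> (\<rho> *\<^sub>v col U i)) = 0 \<and> Re (conjugate (col U i) \<bullet> (\<rho> *\<^sub>v col U i)) \<ge> 0"
    using r cv rm unfolding density_op_def psd_def by auto
  ultimately show ?thesis by simp
qed

lemma density_qf_sum:
  assumes r: "density_op n \<rho>" and U: "unitary_mat n U"
  shows "(\<Sum>i<n. Re (qf n U i \<rho>)) = 1"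
proof -
  have "(\<Sum>i<n. qf n U i \<rho>) = 1" using qf_sum_trace[OF U density_carrier[OF r]] r unfolding density_op_def by simp
  hence "Re (\<Sum>i<n. qf n U i \<rho>) = 1" by simp
  thus ?thesis by (simp add: Re_sum)
qed

lemma chan_density:
  assumes r: "density_op n \<rho>" and U: "unitary_mat n U"
  shows "chan n U c \<rho> = real_diag_mat 2 (\<lambda>r. \<Sum>i<n. c r i * Re (qf n U i \<rho>))"
proof (rule eq_matI)
  fix p q assume "p < dim_row (real_diag_mat 2 (\<lambda>r. \<Sum>i<n. c r i * Re (qf n U i \<rho>)))"
    "q < dim_col (real_diag_mat 2 (\<lambda>r. \<Sum>i<n. c r i * Re (qf n U i \<rho>)))"
  hence pq: "p < 2" "q < 2" by (auto simp: real_diag_mat_def)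
  have ellr: "ell n U c p' \<rho> = complex_of_real (\<Sum>i<n. c p' i * Re (qf n U i \<rho>))" for p'
    unfolding ell_def of_real_sum
  proof (rule sum.cong[OF refl])
    fix i assume "i \<in> {..<n}"
    hence "Im (qf n U i \<rho>) = 0" using density_qf[OF r U] by auto
    hence "qf n U i \<rho> = complex_of_real (Re (qf n U i \<rho>))" by (simp add: complex_eq_iff)
    thus "complex_of_real (c p' i) * qf n U i \<rho> = complex_of_real (c p' i * Re (qf n U i \<rho>))"
      by (metis of_real_mult)
  qed
  show "chan n U c \<rho> $$ (p, q) = real_diag_mat 2 (\<lambda>r. \<Sum>i<n. c r i * Re (qf n U i \<rho>)) $$ (p, q)"
    using pq by (simp add: chan_entry rdm_entry ellr)
qed (auto simp: real_diag_mat_def)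

lemma rdm_diff: "real_diag_mat n p - complex_of_real g \<cdot>\<^sub>m real_diag_mat n q = real_diag_mat n (\<lambda>r. p r - g * q r)"
  by (rule eq_matI) (auto simp: real_diag_mat_def)

lemma E_rdm: "E_div g (real_diag_mat n p) (real_diag_mat n q) = (\<Sum>r<n. max (p r - g * q r) 0)"
  unfolding E_div_def rdm_diff E_diag ..

lemma ratio_bound:
  fixes a b cr :: "nat \<Rightarrow> real"
  assumes a: "\<And>i. i < n \<Longrightarrow> a i \<ge> 0" and b: "\<And>i. i < n \<Longrightarrow> b i \<ge> 0" and bs: "(\<Sum>j<n. b j) = 1"
    and as: "(\<Sum>i<n. a i) = 1"
    and cr: "\<And>i j. i < n \<Longrightarrow> j < n \<Longrightarrow> cr i \<le> g * cr j"
  shows "(\<Sum>i<n. cr i * a i) \<le> g * (\<Sum>j<n. cr j * b j)"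
proof -
  have "cr i \<le> g * (\<Sum>j<n. cr j * b j)" if i: "i < n" for i
  proof -
    have "cr i = (\<Sum>j<n. cr i * b j)" using bs by (simp add: sum_distrib_left[symmetric])
    also have "\<dots> \<le> (\<Sum>j<n. g * cr j * b j)"
      by (rule sum_mono) (use cr i b in \<open>auto intro: mult_right_mono\<close>)
    also have "\<dots> = g * (\<Sum>j<n. cr j * b j)" by (simp add: sum_distrib_left mult_ac)
    finally show ?thesis .
  qed
  hence "(\<Sum>i<n. cr i * a i) \<le> (\<Sum>i<n. g * (\<Sum>j<n. cr j * b j) * a i)"
    by (intro sum_mono) (use a in \<open>auto intro: mult_right_mono\<close>)
  also have "\<dots> = g * (\<Sum>j<n. cr j * b j)" using as by (simp add: sum_distrib_left[symmetric])
  finally show ?thesis .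
qed

lemma chan_LDP:
  assumes U: "unitary_mat n U" and cpos: "\<And>r i. c r i \<ge> 0"
    and csum: "\<And>i. i < n \<Longrightarrow> c 0 i + c 1 i = 1"
    and crat: "\<And>r i j. i < n \<Longrightarrow> j < n \<Longrightarrow> c r i \<le> exp \<epsilon> * c r j"
  shows "LDP \<epsilon> n 2 (chan n U c)"
  unfolding LDP_def cptp_def
proof (intro conjI allI impI)
  show "linear_map_on n 2 (chan n U c)" by (rule chan_linear)
  show "completely_positive n 2 (chan n U c)" by (rule chan_cp[OF cpos])
  show "trace_preserving n (chan n U c)" by (rule chan_tp[OF U csum])
  fix \<rho> \<sigma> assume r: "density_op n \<rho>" and s: "density_op n \<sigma>"
  have "E_div (exp \<epsilon>) (chan n U c \<rho>) (chan n U c \<sigma>)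
     = (\<Sum>r<2. max ((\<Sum>i<n. c r i * Re (qf n U i \<rho>)) - exp \<epsilon> * (\<Sum>i<n. c r i * Re (qf n U i \<sigma>))) 0)"
    unfolding chan_density[OF r U] chan_density[OF s U] E_rdm ..
  also have "\<dots> = (\<Sum>r<(2::nat). 0)"
  proof (rule sum.cong[OF refl])
    fix r
    have "(\<Sum>i<n. c r i * Re (qf n U i \<rho>)) \<le> exp \<epsilon> * (\<Sum>i<n. c r i * Re (qf n U i \<sigma>))"
      by (rule ratio_bound) (use density_qf[OF r U] density_qf[OF s U] density_qf_sum[OF r U] density_qf_sum[OF s U] crat in auto)
    thus "max ((\<Sum>i<n. c r i * Re (qf n U i \<rho>)) - exp \<epsilon> * (\<Sum>i<n. c r i * Re (qf n U i \<sigma>))) 0 = 0" by simp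
  qed
  finally show "E_div (exp \<epsilon>) (chan n U c \<rho>) (chan n U c \<sigma>) = 0" by simp
qed

lemma ln_bound:
  fixes x :: real
  assumes x0: "0 \<le> x" and x1: "x < 1"
  shows "ln (1 - x) \<le> - x - x^2 / 2"
proof -
  define f where "f u = ln (1 - u) + u + u^2 / 2" for u :: real
  have "f x \<le> f 0"
  proof (rule DERIV_nonpos_imp_nonincreasing[OF x0])
    fix u assume u: "0 \<le> u" "u \<le> x"
    hence u1: "u < 1" using x1 by simp
    have "DERIV f u :> (- 1 / (1 - u) + 1 + u)"
      unfolding f_def using u1
      by (auto intro!: derivative_eq_intros simp: power2_eq_square field_simps)
    moreover have "- 1 / (1 - u) + 1 + u \<le> 0"
    proof -
      have "(1 + u) * (1 - u) \<le> 1" by (simp add: algebra_simps)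
      hence "1 + u \<le> 1 / (1 - u)" using u1 by (simp add: field_simps)
      thus ?thesis by simp
    qed
    ultimately show "\<exists>y. DERIV f u :> y \<and> y \<le> 0" by blast
  qed
  thus ?thesis unfolding f_def by simp
qed

lemma ln5: "3 / 2 \<le> ln (5::real)"
proof -
  have e: "exp (1/8 :: real) \<le> 73/64" using exp_bound[of "1/8::real"] by (simp add: power2_eq_square)
  have "exp (1/8 :: real) ^ 12 \<le> (73/64) ^ 12" by (rule power_mono[OF e]) simp
  also have "(73/64 :: real) ^ 12 \<le> 5" by (simp add: power_divide)
  also have "exp (1/8 :: real) ^ 12 = exp (3/2)" by (simp add: exp_of_nat_mult[symmetric])
  finally have "exp (3/2 :: real) \<le> 5" .
  thus ?thesis by (subst ln_ge_iff) auto
qed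

lemma bc_bound:
  fixes p q :: real
  assumes p: "0 \<le> p" "p \<le> 1" and q: "0 \<le> q" "q \<le> 1"
  shows "sqrt (p * q) + sqrt ((1 - p) * (1 - q)) \<le> sqrt (1 - (p - q)^2)"
proof (rule real_le_rsqrt)
  have A: "(sqrt (p * q))^2 = p * q" using p q by simp
  have B: "(sqrt ((1 - p) * (1 - q)))^2 = (1 - p) * (1 - q)" using p q by simp
  have AB: "sqrt (p * q) * sqrt ((1 - p) * (1 - q)) = sqrt ((p * (1 - p)) * (q * (1 - q)))"
    by (simp add: real_sqrt_mult[symmetric] mult_ac)
  also have "\<dots> \<le> (p * (1 - p) + q * (1 - q)) / 2"
    by (rule arith_geo_mean_sqrt) (use p q in auto)
  finally have AB': "sqrt (p * q) * sqrt ((1 - p) * (1 - q)) \<le> (p * (1 - p) + q * (1 - q)) / 2" .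
  have "(sqrt (p * q) + sqrt ((1 - p) * (1 - q)))^2 = p * q + (1 - p) * (1 - q) + 2 * (sqrt (p * q) * sqrt ((1 - p) * (1 - q)))"
    unfolding power2_sum A B by simp
  also have "\<dots> \<le> p * q + (1 - p) * (1 - q) + (p * (1 - p) + q * (1 - q))" using AB' by simp
  also have "\<dots> = 1 - (p - q)^2" by (simp add: power2_eq_square algebra_simps)
  finally show "(sqrt (p * q) + sqrt ((1 - p) * (1 - q)))^2 \<le> 1 - (p - q)^2" .
qed

lemma choose_m:
  fixes t :: real
  assumes t0: "0 < t" and t1: "t < 1"
  shows "\<exists>m::nat. real m \<le> 2 * ln 5 / t^2 \<and> (sqrt (1 - t^2))^m \<le> 1/5"
proof -
  define x where "x = t^2"
  have x0: "0 < x" and x1: "x < 1" unfolding x_def using t0 t1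
    by (auto simp: power_less_one_iff abs_less_iff)
  define L where "L = ln (5::real)"
  have L: "3/2 \<le> L" unfolding L_def by (rule ln5)
  define y where "y = 2 * L / x"
  have y1: "y \<ge> 1" unfolding y_def using x0 x1 L by (simp add: field_simps)
  define m where "m = nat \<lfloor>y\<rfloor>"
  have my: "real m \<le> y" unfolding m_def using y1 by simp
  have my2: "real m \<ge> y - 1" unfolding m_def using y1 by linarith
  have key: "real m * (x + x^2/2) \<ge> 2 * L"
  proof -
    have "(y - 1) * (x + x^2/2) \<le> real m * (x + x^2/2)"
      using my2 x0 by (intro mult_right_mono) auto
    moreover have "(y - 1) * (x + x^2/2) = 2 * L + x * (L - 1 - x / 2)"
      unfolding y_def using x0 by (simp add: field_simps power2_eq_square)
    moreover have "x * (L - 1 - x / 2) \<ge> 0" using x0 x1 L by simp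
    ultimately show ?thesis by linarith
  qed
  have "(1 - x)^m = exp (real m * ln (1 - x))"
    using x1 by (subst exp_of_nat_mult) simp
  also have "\<dots> \<le> exp (real m * (- x - x^2/2))"
    using ln_bound[of x] x0 x1 by (intro exp_le_cancel_iff[THEN iffD2] mult_left_mono) auto
  also have "\<dots> \<le> exp (- 2 * L)"
  proof -
    have "real m * (- x - x^2/2) = - (real m * (x + x^2/2))" by (simp add: algebra_simps)
    thus ?thesis using key by simp
  qed
  also have "\<dots> = 1 / 25"
  proof -
    have "exp (2 * L) = exp (L + L)" by (simp only: mult_2)
    also have "\<dots> = exp L * exp L" by (rule exp_add)
    also have "\<dots> = 25" unfolding L_def by simp
    finally show ?thesis by (simp add: exp_minus)
  qed
  finally have pw: "(1 - x)^m \<le> 1/25" .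
  have "(sqrt (1 - x))^m = sqrt ((1 - x)^m)" by (simp add: real_sqrt_power)
  also have "\<dots> \<le> sqrt (1/25)" using pw by simp
  also have "sqrt (1/25) = (1/5 :: real)" by (simp add: real_sqrt_divide)
  finally show ?thesis using my unfolding y_def x_def L_def by blast
qed

fun tp :: "(nat \<Rightarrow> real) \<Rightarrow> nat \<Rightarrow> nat \<Rightarrow> real" where
  "tp f 0 = (\<lambda>_. 1)"
| "tp f (Suc m) = (\<lambda>k. tp f m (k div 2) * f (k mod 2))"

lemma tensor_pow_rdm: "tensor_pow (real_diag_mat 2 f) m = real_diag_mat (2^m) (tp f m)"
proof (induction m)
  case 0
  show ?case by (rule eq_matI) (auto simp: real_diag_mat_def)
next
  case (Suc m)
  have d: "2 ^ m * 2 = (2::nat) ^ Suc m" by simp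
  show ?case unfolding tensor_pow.simps Suc
  proof (rule eq_matI)
    fix i j assume "i < dim_row (real_diag_mat (2 ^ Suc m) (tp f (Suc m)))" "j < dim_col (real_diag_mat (2 ^ Suc m) (tp f (Suc m)))"
    hence i: "i < 2^m * 2" and j: "j < 2^m * 2" by (auto simp: real_diag_mat_def)
    have i2: "i div 2 < 2^m" "j div 2 < 2^m" using i j by auto
    have eq: "(i div 2 = j div 2 \<and> i mod 2 = j mod 2) = (i = j)" by (metis div_mod_decomp)
    have "kron (real_diag_mat (2 ^ m) (tp f m)) (real_diag_mat 2 f) $$ (i, j)
      = real_diag_mat (2 ^ m) (tp f m) $$ (i div 2, j div 2) * real_diag_mat 2 f $$ (i mod 2, j mod 2)"
      unfolding kron_def using i j by (simp add: real_diag_mat_def)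
    also have "\<dots> = (if i = j then complex_of_real (tp f (Suc m) i) else 0)"
      using i2 eq by (auto simp: rdm_entry)
    also have "\<dots> = real_diag_mat (2 ^ Suc m) (tp f (Suc m)) $$ (i, j)"
      using i j d by (simp add: rdm_entry)
    finally show "kron (real_diag_mat (2 ^ m) (tp f m)) (real_diag_mat 2 f) $$ (i, j) = real_diag_mat (2 ^ Suc m) (tp f (Suc m)) $$ (i, j)" .
  qed (auto simp: kron_def real_diag_mat_def)
qed

lemma sum_pairs:
  fixes g h :: "nat \<Rightarrow> real"
  shows "(\<Sum>k<2^Suc m. g (k div 2) * h (k mod 2)) = (\<Sum>k<2^m. g k) * (h 0 + h 1)"
proof -
  have "(\<Sum>k<2^Suc m. g (k div 2) * h (k mod 2)) = (\<Sum>k<2^m * 2. g (k div 2) * h (k mod 2))"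
    by (simp add: mult.commute)
  also have "\<dots> = (\<Sum>a<2^m. \<Sum>s<2. g ((a * 2 + s) div 2) * h ((a * 2 + s) mod 2))"
    by (rule sum_split_nat)
  also have "\<dots> = (\<Sum>a<2^m. g a * (h 0 + h 1))"
  proof (intro sum.cong refl)
    fix a
    have "{..<2::nat} = {0, 1}" by auto
    thus "(\<Sum>s<2. g ((a * 2 + s) div 2) * h ((a * 2 + s) mod 2)) = g a * (h 0 + h 1)"
      by (simp add: algebra_simps)
  qed
  also have "\<dots> = (\<Sum>k<2^m. g k) * (h 0 + h 1)" by (simp add: sum_distrib_right)
  finally show ?thesis .
qed

lemma tp_nonneg: "(\<And>r. f r \<ge> 0) \<Longrightarrow> tp f m k \<ge> 0"
  by (induction m arbitrary: k) auto

lemma tp_sum: "(\<Sum>k<2^m. tp f m k) = (f 0 + f 1)^m"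
proof (induction m)
  case (Suc m)
  show ?case using sum_pairs[of "tp f m" f m] Suc by simp
qed simp

lemma tp_sqrt: 
  assumes "\<And>r. p r \<ge> 0" "\<And>r. q r \<ge> 0"
  shows "(\<Sum>k<2^m. sqrt (tp p m k * tp q m k)) = (sqrt (p 0 * q 0) + sqrt (p 1 * q 1))^m"
proof (induction m)
  case (Suc m)
  have "(\<Sum>k<2^Suc m. sqrt (tp p (Suc m) k * tp q (Suc m) k))
      = (\<Sum>k<2^Suc m. sqrt (tp p m (k div 2) * tp q m (k div 2)) * sqrt (p (k mod 2) * q (k mod 2)))"
    by (intro sum.cong refl) (simp add: real_sqrt_mult[symmetric] mult_ac)
  also have "\<dots> = (\<Sum>k<2^m. sqrt (tp p m k * tp q m k)) * (sqrt (p 0 * q 0) + sqrt (p 1 * q 1))"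
    by (rule sum_pairs)
  finally show ?case using Suc by simp
qed simp

lemma min_le_sqrt:
  fixes a b :: real
  assumes "0 \<le> a" "0 \<le> b"
  shows "min a b \<le> sqrt (a * b)"
proof (rule real_le_rsqrt)
  have "min a b * min a b \<le> a * b"
    using assms by (cases "a \<le> b") (auto intro: mult_mono)
  thus "(min a b)^2 \<le> a * b" by (simp add: power2_eq_square)
qed

lemma perr_tensor:
  assumes p: "\<And>r. p r \<ge> 0" "p 0 + p 1 = 1" and q: "\<And>r. q r \<ge> 0" "q 0 + q 1 = 1"
  shows "p_err (tensor_pow (real_diag_mat 2 p) m) (tensor_pow (real_diag_mat 2 q) m) (1/2)
     \<le> (1/2) * (sqrt (p 0 * q 0) + sqrt (p 1 * q 1))^m"
proof -
  let ?P = "tp p m" and ?Q = "tp q m"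
  have E: "E_div 1 (tensor_pow (real_diag_mat 2 p) m) (tensor_pow (real_diag_mat 2 q) m) = (\<Sum>k<2^m. max (?P k - 1 * ?Q k) 0)"
    unfolding tensor_pow_rdm E_rdm ..
  have Ps: "(\<Sum>k<2^m. ?P k) = 1" using tp_sum[of p m] p(2) by simp
  have "(\<Sum>k<2^m. max (?P k - 1 * ?Q k) 0) = (\<Sum>k<2^m. ?P k - min (?P k) (?Q k))"
    by (intro sum.cong refl) (simp add: max_def min_def)
  also have "\<dots> = 1 - (\<Sum>k<2^m. min (?P k) (?Q k))"
    by (simp add: sum_subtractf Ps)
  also have "\<dots> \<ge> 1 - (\<Sum>k<2^m. sqrt (?P k * ?Q k))"
    by (simp add: sum_mono min_le_sqrt tp_nonneg p q)
  finally have "E_div 1 (tensor_pow (real_diag_mat 2 p) m) (tensor_pow (real_diag_mat 2 q) m)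
      \<ge> 1 - (sqrt (p 0 * q 0) + sqrt (p 1 * q 1))^m"
    unfolding E tp_sqrt[OF p(1) q(1)] .
  thus ?thesis unfolding p_err_def by simp
qed

lemma qf_diff:
  fixes X Y :: "complex mat"
  assumes X: "X \<in> carrier_mat n n" and Y: "Y \<in> carrier_mat n n"
  shows "qf n U i (X - complex_of_real g \<cdot>\<^sub>m Y) = qf n U i X - complex_of_real g * qf n U i Y"
proof -
  have "qf n U i (X - complex_of_real g \<cdot>\<^sub>m Y) = (\<Sum>s<n. \<Sum>t<n. cnj (U $$ (s,i)) * X $$ (s,t) * U $$ (t,i) - complex_of_real g * (cnj (U $$ (s,i)) * Y $$ (s,t) * U $$ (t,i)))"
    unfolding qf_def using X Y by (intro sum.cong refl) (simp add: algebra_simps)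
  also have "\<dots> = qf n U i X - complex_of_real g * qf n U i Y"
    unfolding qf_def by (simp add: sum_subtractf sum_distrib_left)
  finally show ?thesis .
qed

lemma mtrace_diff:
  fixes X Y :: "complex mat"
  assumes X: "X \<in> carrier_mat n n" and Y: "Y \<in> carrier_mat n n"
  shows "mtrace (X - complex_of_real g \<cdot>\<^sub>m Y) = mtrace X - complex_of_real g * mtrace Y"
proof -
  have "mtrace (X - complex_of_real g \<cdot>\<^sub>m Y) = (\<Sum>i<n. X $$ (i,i) - complex_of_real g * Y $$ (i,i))"
    unfolding mtrace_def using X Y by (intro sum.cong) auto
  thus ?thesis unfolding mtrace_def using X Y by (simp add: sum_subtractf sum_distrib_left)
qed

theorem mainTheorem2:
  fixes \<epsilon> :: real and dA :: nat and \<rho> \<sigma> :: "complex mat"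
  assumes "\<epsilon> > 0"
    and "density_op dA \<rho>" and "density_op dA \<sigma>"
  shows "n_B_priv \<epsilon> dA \<rho> \<sigma> (1/2) (1/10) \<le>
    (if E_div 1 \<rho> \<sigma> = 0 then \<infinity>
     else ereal (((exp \<epsilon> + 1) / (exp \<epsilon> - 1))^2 * (2 * ln 5) / (E_div 1 \<rho> \<sigma>)^2))"
proof (cases "E_div 1 \<rho> \<sigma> = 0")
  case True thus ?thesis by simp
next
  case False
  note eps = assms(1) and r = assms(2) and s = assms(3)
  define n where "n = dA"
  have rm: "\<rho> \<in> carrier_mat n n" and sm: "\<sigma> \<in> carrier_mat n n"
    using density_carrier[OF r] density_carrier[OF s] unfolding n_def by auto
  define A where "A = \<rho> - complex_of_real 1 \<cdot>\<^sub>m \<sigma>"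
  have Am: "A \<in> carrier_mat n n" unfolding A_def using sm by (intro minus_carrier_mat smult_carrier_mat)
  have hA: "mat_adjoint A = A"
  proof (rule eq_matI)
    fix i j assume "i < dim_row A" "j < dim_col A"
    hence ij: "i < n" "j < n" using Am by auto
    have "mat_adjoint A $$ (i,j) = cnj (A $$ (j,i))" by (rule adj_entry[OF Am ij])
    also have "\<dots> = cnj (\<rho> $$ (j,i)) - cnj (\<sigma> $$ (j,i))" unfolding A_def using ij rm sm by simp
    also have "\<dots> = \<rho> $$ (i,j) - \<sigma> $$ (i,j)"
      using herm_entry[OF rm density_herm[OF r[folded n_def]] ij] herm_entry[OF sm density_herm[OF s[folded n_def]] ij]
      by simp
    also have "\<dots> = A $$ (i,j)" unfolding A_def using ij rm sm by simp
    finally show "mat_adjoint A $$ (i,j) = A $$ (i,j)" .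
  qed (use Am adj_carrier[OF Am] in auto)
  obtain U lam where U: "unitary_mat n U" and AU: "A = U * real_diag_mat n lam * mat_adjoint U"
    and PA: "pos_part A = U * real_diag_mat n (\<lambda>i. max (lam i) 0) * mat_adjoint U"
    using pos_part_spec[OF Am hA] by blast
  define \<eta> where "\<eta> = E_div 1 \<rho> \<sigma>"
  have eta: "\<eta> = (\<Sum>i<n. max (lam i) 0)"
    unfolding \<eta>_def E_div_def A_def[symmetric] PA trace_triple[OF U] by simp
  have eta0: "\<eta> > 0"
  proof -
    have "\<eta> \<ge> 0" unfolding eta by (rule sum_nonneg) auto
    moreover have "\<eta> \<noteq> 0" using False unfolding \<eta>_def .
    ultimately show ?thesis by simp
  qed
  define a where "a i = Re (qf n U i \<rho>)" for i
  define b where "b i = Re (qf n U i \<sigma>)" for i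
  have a0: "a i \<ge> 0" if "i < n" for i using density_qf[OF r[folded n_def] U that] unfolding a_def by simp
  have b0: "b i \<ge> 0" if "i < n" for i using density_qf[OF s[folded n_def] U that] unfolding b_def by simp
  have asum: "(\<Sum>i<n. a i) = 1" unfolding a_def by (rule density_qf_sum[OF r[folded n_def] U])
  have bsum: "(\<Sum>i<n. b i) = 1" unfolding b_def by (rule density_qf_sum[OF s[folded n_def] U])
  have lam_ab: "lam i = a i - b i" if i: "i < n" for i
  proof -
    have "complex_of_real (lam i) = qf n U i A" unfolding AU by (rule qf_triple[OF U i, symmetric])
    also have "\<dots> = qf n U i \<rho> - qf n U i \<sigma>" unfolding A_def qf_diff[OF rm sm] by simp
    finally have "lam i = Re (qf n U i \<rho> - qf n U i \<sigma>)" by (metis Re_complex_of_real)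
    thus ?thesis unfolding a_def b_def by simp
  qed
  have lamsum: "(\<Sum>i<n. lam i) = 0"
  proof -
    have "complex_of_real (\<Sum>i<n. lam i) = mtrace A" unfolding AU trace_triple[OF U] ..
    also have "\<dots> = mtrace \<rho> - mtrace \<sigma>" unfolding A_def mtrace_diff[OF rm sm] by simp
    also have "\<dots> = 0" using r s unfolding density_op_def by simp
    finally show ?thesis by (simp only: of_real_eq_0_iff)
  qed
  have eta1: "\<eta> \<le> 1"
  proof -
    have "\<eta> \<le> (\<Sum>i<n. a i)" unfolding eta
      by (rule sum_mono) (use lam_ab a0 b0 in auto)
    thus ?thesis using asum by simp
  qed
  define e where "e = exp \<epsilon>"
  have e1: "e > 1" unfolding e_def using eps by simp
  define c :: "nat \<Rightarrow> nat \<Rightarrow> real" where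
    "c r i = (if r = 0 then (if lam i > 0 then e else 1) else (if lam i > 0 then 1 else e)) / (e + 1)" for r i
  have cpos: "c r i \<ge> 0" for r i unfolding c_def using e1 by auto
  have ne: "e + 1 \<noteq> 0" "1 + e \<noteq> 0" using e1 by simp_all
  have csum: "c 0 i + c 1 i = 1" for i unfolding c_def
    by (cases "lam i > 0") (simp_all add: add_divide_distrib[symmetric] ne add.commute)
  have crat: "c r i \<le> exp \<epsilon> * c r j" for r i j
  proof -
    have "c r i \<le> e / (e + 1)" unfolding c_def using e1 by (auto intro!: divide_right_mono)
    also have "\<dots> = e * (1 / (e + 1))" by simp
    also have "\<dots> \<le> e * c r j" unfolding c_def using e1 by (intro mult_left_mono) (auto intro!: divide_right_mono)
    finally show ?thesis unfolding e_def .
  qed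
  define \<Phi> where "\<Phi> = chan n U c"
  have LDP: "LDP \<epsilon> dA 2 \<Phi>" unfolding \<Phi>_def n_def[symmetric]
    by (rule chan_LDP[OF U cpos csum crat])
  define P where "P r = (\<Sum>i<n. c r i * a i)" for r
  define Q where "Q r = (\<Sum>i<n. c r i * b i)" for r
  have Pr: "\<Phi> \<rho> = real_diag_mat 2 P" unfolding \<Phi>_def P_def a_def by (rule chan_density[OF r[folded n_def] U])
  have Qs: "\<Phi> \<sigma> = real_diag_mat 2 Q" unfolding \<Phi>_def Q_def b_def by (rule chan_density[OF s[folded n_def] U])
  have P0: "P r \<ge> 0" for r unfolding P_def using cpos a0 by (auto intro!: sum_nonneg)
  have Q0: "Q r \<ge> 0" for r unfolding Q_def using cpos b0 by (auto intro!: sum_nonneg)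
  have P1: "P 0 + P 1 = 1"
  proof -
    have "P 0 + P 1 = (\<Sum>i<n. (c 0 i + c 1 i) * a i)" unfolding P_def by (simp add: sum.distrib algebra_simps)
    thus ?thesis using csum asum by simp
  qed
  have Q1: "Q 0 + Q 1 = 1"
  proof -
    have "Q 0 + Q 1 = (\<Sum>i<n. (c 0 i + c 1 i) * b i)" unfolding Q_def by (simp add: sum.distrib algebra_simps)
    thus ?thesis using csum bsum by simp
  qed
  define \<kappa> where "\<kappa> = (e - 1) / (e + 1)"
  define t where "t = P 0 - Q 0"
  have t_eq: "t = \<kappa> * \<eta>"
  proof -
    have "t = (\<Sum>i<n. c 0 i * lam i)" unfolding t_def P_def Q_def
      by (simp add: sum_subtractf[symmetric] lam_ab algebra_simps)
    also have "\<dots> = (\<Sum>i<n. (lam i + (e - 1) * max (lam i) 0) / (e + 1))"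
      unfolding c_def by (intro sum.cong refl) (auto simp: field_simps max_def)
    also have "\<dots> = (\<Sum>i<n. lam i + (e - 1) * max (lam i) 0) / (e + 1)"
      by (rule sum_divide_distrib[symmetric])
    also have "\<dots> = ((\<Sum>i<n. lam i) + (e - 1) * (\<Sum>i<n. max (lam i) 0)) / (e + 1)"
      by (simp add: sum.distrib sum_distrib_left)
    also have "\<dots> = \<kappa> * \<eta>" unfolding lamsum eta \<kappa>_def by simp
    finally show ?thesis .
  qed
  have k0: "0 < \<kappa>" and k1: "\<kappa> < 1" unfolding \<kappa>_def using e1 by auto
  have t0: "0 < t" unfolding t_eq using k0 eta0 by simp
  have t1: "t < 1" unfolding t_eq using k1 eta1 eta0 k0
    by (metis less_le_trans mult_le_cancel_left1 linorder_not_le order.strict_implies_order mult_less_cancel_left_pos mult.right_neutral)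
  obtain m :: nat where m1: "real m \<le> 2 * ln 5 / t^2" and m2: "(sqrt (1 - t^2))^m \<le> 1/5"
    using choose_m[OF t0 t1] by blast
  have BC: "sqrt (P 0 * Q 0) + sqrt (P 1 * Q 1) \<le> sqrt (1 - t^2)"
  proof -
    have "P 1 = 1 - P 0" "Q 1 = 1 - Q 0" using P1 Q1 by auto
    moreover have "P 0 \<le> 1" "Q 0 \<le> 1" using P1 Q1 P0[of 1] Q0[of 1] by auto
    ultimately show ?thesis unfolding t_def using bc_bound[of "P 0" "Q 0"] P0 Q0 by simp
  qed
  have "p_err (tensor_pow (\<Phi> \<rho>) m) (tensor_pow (\<Phi> \<sigma>) m) (1/2) \<le> (1/2) * (sqrt (P 0 * Q 0) + sqrt (P 1 * Q 1))^m"
    unfolding Pr Qs by (rule perr_tensor[OF P0 P1 Q0 Q1])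
  also have "\<dots> \<le> (1/2) * (sqrt (1 - t^2))^m"
    using BC by (intro mult_left_mono power_mono) (auto simp: P0 Q0)
  also have "\<dots> \<le> (1/2) * (1/5)" using m2 by simp
  finally have perr: "p_err (tensor_pow (\<Phi> \<rho>) m) (tensor_pow (\<Phi> \<sigma>) m) (1/2) \<le> 1/10" by simp
  have "n_B (\<Phi> \<rho>) (\<Phi> \<sigma>) (1/2) (1/10) \<le> ereal (real m)"
    unfolding n_B_def by (rule INF_lower) (use perr in simp)
  moreover have "n_B_priv \<epsilon> dA \<rho> \<sigma> (1/2) (1/10) \<le> n_B (\<Phi> \<rho>) (\<Phi> \<sigma>) (1/2) (1/10)"
  proof -
    have "(2, \<Phi>) \<in> {(dB, \<Phi>). LDP \<epsilon> dA dB \<Phi>}" using LDP by simp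
    hence "(INF x \<in> {(dB, \<Phi>). LDP \<epsilon> dA dB \<Phi>}. (case x of (dB, \<Phi>) \<Rightarrow> n_B (\<Phi> \<rho>) (\<Phi> \<sigma>) (1/2) (1/10)))
        \<le> (case (2::nat, \<Phi>) of (dB, \<Phi>) \<Rightarrow> n_B (\<Phi> \<rho>) (\<Phi> \<sigma>) (1/2) (1/10))"
      by (rule INF_lower)
    thus ?thesis unfolding n_B_priv_def by simp
  qed
  moreover have "real m \<le> ((exp \<epsilon> + 1) / (exp \<epsilon> - 1))^2 * (2 * ln 5) / (E_div 1 \<rho> \<sigma>)^2"
  proof -
    have "2 * ln 5 / t^2 = ((e + 1) / (e - 1))^2 * (2 * ln 5) / \<eta>^2"
      unfolding t_eq \<kappa>_def using e1 eta0 by (simp add: field_simps power2_eq_square)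
    thus ?thesis using m1 unfolding e_def \<eta>_def by simp
  qed
  ultimately show ?thesis using False by (simp add: order_trans)
qed

end
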